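(* Let $\ell$ be an odd prime. Then every $\underline{\mathbb Z/\ell}$-module is a direct sum of copies of $H$ and $S_\Theta$. Moreover, every $\underline{\mathbb Z/\ell}$-module is projective and every short exact sequence of $\underline{\mathbb Z/\ell}$-modules splits.
   Context: A $C_2$-Mackey functor $M$ consists of abelian groups $M_\Theta,M_\bullet$ with homomorphisms $t\colon M_\Theta\to M_\Theta$, $p^*\colon M_\bullet\to M_\Theta$, $p_*\colon M_\Theta\to M_\bullet$ satisfying $tp^*=p^*$, $p_*t=p_*$, $t^2=1$, $p^*p_*=1+t$. A $\underline{\mathbb Z/\ell}$-module (module over the constant Mackey ring $\underline{\mathbb Z/\ell}$) is exactly a Mackey functor with $\ell M_\Theta=0$, $\ell M_\bullet=0$ and $p_*p^*=2$. Here $H=\underline{\mathbb Z/\ell}$ is the module with $H_\Theta=H_\bullet=\mathbb Z/\ell$, $p^*=t=\mathrm{id}$, $p_*=2$, and $S_\Theta$ is the module with $(S_\Theta)_\Theta=\mathbb Z/\ell$, $t=-1$, and $(S_\Theta)_\bullet=0$. *)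

theory Defs
  imports "HOL-Algebra.Algebra" "HOL-Computational_Algebra.Primes"
begin

text \<open>The abelian groups M_Theta and M_bullet are HOL-Algebra
  (commutative) groups, written multiplicatively: the group law of the abelian group
  is the monoid multiplication, 0 is the unit, and n*x is x [^] n.\<close>

record ('a, 'b) mackey =
  theta :: "'a monoid"
  bullet :: "'b monoid"
  tw :: "'a \<Rightarrow> 'a"
  res :: "'b \<Rightarrow> 'a"
  tr :: "'a \<Rightarrow> 'b"

definition is_mackey :: "('a, 'b) mackey \<Rightarrow> bool" where
  "is_mackey M \<longleftrightarrow>
     comm_group (theta M) \<and> comm_group (bullet M) \<and>
     tw M \<in> hom (theta M) (theta M) \<and>
     res M \<in> hom (bullet M) (theta M) \<and>
     tr M \<in> hom (theta M) (bullet M) \<and>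
     (\<forall>y \<in> carrier (bullet M). tw M (res M y) = res M y) \<and>
     (\<forall>x \<in> carrier (theta M). tr M (tw M x) = tr M x) \<and>
     (\<forall>x \<in> carrier (theta M). tw M (tw M x) = x) \<and>
     (\<forall>x \<in> carrier (theta M). res M (tr M x) = x \<otimes>\<^bsub>theta M\<^esub> tw M x)"

definition zl_module :: "nat \<Rightarrow> ('a, 'b) mackey \<Rightarrow> bool" where
  "zl_module l M \<longleftrightarrow> is_mackey M \<and>
     (\<forall>x \<in> carrier (theta M). x [^]\<^bsub>theta M\<^esub> l = \<one>\<^bsub>theta M\<^esub>) \<and>
     (\<forall>y \<in> carrier (bullet M). y [^]\<^bsub>bullet M\<^esub> l = \<one>\<^bsub>bullet M\<^esub>) \<and>
     (\<forall>y \<in> carrier (bullet M). tr M (res M y) = y \<otimes>\<^bsub>bullet M\<^esub> y)"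

definition mackey_hom ::
  "('a, 'b) mackey \<Rightarrow> ('c, 'd) mackey \<Rightarrow> ('a \<Rightarrow> 'c) \<times> ('b \<Rightarrow> 'd) \<Rightarrow> bool" where
  "mackey_hom M N f \<longleftrightarrow>
     fst f \<in> hom (theta M) (theta N) \<and> snd f \<in> hom (bullet M) (bullet N) \<and>
     (\<forall>x \<in> carrier (theta M). fst f (tw M x) = tw N (fst f x)) \<and>
     (\<forall>y \<in> carrier (bullet M). fst f (res M y) = res N (snd f y)) \<and>
     (\<forall>x \<in> carrier (theta M). snd f (tr M x) = tr N (fst f x))"

definition mackey_iso ::
  "('a, 'b) mackey \<Rightarrow> ('c, 'd) mackey \<Rightarrow> ('a \<Rightarrow> 'c) \<times> ('b \<Rightarrow> 'd) \<Rightarrow> bool" where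
  "mackey_iso M N f \<longleftrightarrow> mackey_hom M N f \<and>
     fst f \<in> iso (theta M) (theta N) \<and> snd f \<in> iso (bullet M) (bullet N)"

definition mackey_isomorphic :: "('a, 'b) mackey \<Rightarrow> ('c, 'd) mackey \<Rightarrow> bool" where
  "mackey_isomorphic M N \<longleftrightarrow> (\<exists>f. mackey_iso M N f)"

definition mackey_sum :: "'i set \<Rightarrow> ('i \<Rightarrow> ('a, 'b) mackey) \<Rightarrow> ('i \<Rightarrow> 'a, 'i \<Rightarrow> 'b) mackey" where
  "mackey_sum I F =
     \<lparr> theta = sum_group I (\<lambda>i. theta (F i)),
       bullet = sum_group I (\<lambda>i. bullet (F i)),
       tw = (\<lambda>x. \<lambda>i\<in>I. tw (F i) (x i)),
       res = (\<lambda>y. \<lambda>i\<in>I. res (F i) (y i)),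
       tr = (\<lambda>x. \<lambda>i\<in>I. tr (F i) (x i)) \<rparr>"

definition zmod_group :: "nat \<Rightarrow> int monoid" where
  "zmod_group l = \<lparr> carrier = {0..<int l}, monoid.mult = (\<lambda>x y. (x + y) mod int l), one = 0 \<rparr>"

definition trivial_group :: "int monoid" where
  "trivial_group = \<lparr> carrier = {0}, monoid.mult = (\<lambda>x y. 0), one = 0 \<rparr>"

definition H_mackey :: "nat \<Rightarrow> (int, int) mackey" where
  "H_mackey l = \<lparr> theta = zmod_group l, bullet = zmod_group l,
     tw = (\<lambda>x. x), res = (\<lambda>y. y), tr = (\<lambda>x. (2 * x) mod int l) \<rparr>"

definition S_mackey :: "nat \<Rightarrow> (int, int) mackey" where
  "S_mackey l = \<lparr> theta = zmod_group l, bullet = trivial_group,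
     tw = (\<lambda>x. (- x) mod int l), res = (\<lambda>y. 0), tr = (\<lambda>x. 0) \<rparr>"

text \<open>M is (isomorphic to) a direct sum of copies of H and S_Theta. The index set is
  taken inside the type 'a + 'b, which is large enough for any decomposition of M.\<close>

definition sum_of_H_S :: "nat \<Rightarrow> ('a, 'b) mackey \<Rightarrow> bool" where
  "sum_of_H_S l M \<longleftrightarrow>
     (\<exists>(I :: ('a + 'b) set) F. (\<forall>i \<in> I. F i = H_mackey l \<or> F i = S_mackey l) \<and>
        mackey_isomorphic M (mackey_sum I F))"

definition mackey_surj :: "('a, 'b) mackey \<Rightarrow> ('c, 'd) mackey \<Rightarrow> ('a \<Rightarrow> 'c) \<times> ('b \<Rightarrow> 'd) \<Rightarrow> bool" where
  "mackey_surj M N f \<longleftrightarrow>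
     fst f ` carrier (theta M) = carrier (theta N) \<and> snd f ` carrier (bullet M) = carrier (bullet N)"

definition mackey_inj :: "('a, 'b) mackey \<Rightarrow> ('a \<Rightarrow> 'c) \<times> ('b \<Rightarrow> 'd) \<Rightarrow> bool" where
  "mackey_inj M f \<longleftrightarrow> inj_on (fst f) (carrier (theta M)) \<and> inj_on (snd f) (carrier (bullet M))"

definition mackey_exact_at ::
  "('a, 'b) mackey \<Rightarrow> ('c, 'd) mackey \<Rightarrow> ('e, 'f) mackey \<Rightarrow>
   ('a \<Rightarrow> 'c) \<times> ('b \<Rightarrow> 'd) \<Rightarrow> ('c \<Rightarrow> 'e) \<times> ('d \<Rightarrow> 'f) \<Rightarrow> bool" where
  "mackey_exact_at A B C f g \<longleftrightarrow>
     fst f ` carrier (theta A) = kernel (theta B) (theta C) (fst g) \<and>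
     snd f ` carrier (bullet A) = kernel (bullet B) (bullet C) (snd g)"

definition short_exact ::
  "('a, 'b) mackey \<Rightarrow> ('c, 'd) mackey \<Rightarrow> ('e, 'f) mackey \<Rightarrow>
   ('a \<Rightarrow> 'c) \<times> ('b \<Rightarrow> 'd) \<Rightarrow> ('c \<Rightarrow> 'e) \<times> ('d \<Rightarrow> 'f) \<Rightarrow> bool" where
  "short_exact A B C f g \<longleftrightarrow> mackey_hom A B f \<and> mackey_hom B C g \<and>
     mackey_inj A f \<and> mackey_exact_at A B C f g \<and> mackey_surj B C g"

definition ses_splits ::
  "('c, 'd) mackey \<Rightarrow> ('e, 'f) mackey \<Rightarrow> ('c \<Rightarrow> 'e) \<times> ('d \<Rightarrow> 'f) \<Rightarrow> bool" where
  "ses_splits B C g \<longleftrightarrow> (\<exists>s. mackey_hom C B s \<and>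
     (\<forall>z \<in> carrier (theta C). fst g (fst s z) = z) \<and>
     (\<forall>z \<in> carrier (bullet C). snd g (snd s z) = z))"

definition lifts_through ::
  "('a, 'b) mackey \<Rightarrow> ('c, 'd) mackey \<Rightarrow> ('a \<Rightarrow> 'e) \<times> ('b \<Rightarrow> 'f) \<Rightarrow> ('c \<Rightarrow> 'e) \<times> ('d \<Rightarrow> 'f) \<Rightarrow> bool" where
  "lifts_through M N f g \<longleftrightarrow> (\<exists>h. mackey_hom M N h \<and>
     (\<forall>x \<in> carrier (theta M). fst g (fst h x) = fst f x) \<and>
     (\<forall>y \<in> carrier (bullet M). snd g (snd h y) = snd f y))"

end

theory Submission
  imports Defs
begin


context group begin

lemma pow_mod_l:
  assumes x: "x \<in> carrier G" and l: "x [^] (l::nat) = \<one>"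
  shows "x [^] (i::int) = x [^] (i mod int l)"
proof -
  have e1: "x [^] i = x [^] (int l * (i div int l) + i mod int l)" by simp
  have e2: "x [^] (int l * (i div int l) + i mod int l) = x [^] (int l * (i div int l)) \<otimes> x [^] (i mod int l)"
    by (rule int_pow_mult[OF x])
  have e3: "x [^] (int l * (i div int l)) = (x [^] int l) [^] (i div int l)"
    using int_pow_pow[OF x] by simp
  have e4: "x [^] int l = \<one>" using l by (simp add: int_pow_int)
  show ?thesis using e1 e2 e3 e4 x by simp
qed

lemma pow_dvd_l:
  assumes x: "x \<in> carrier G" and l: "x [^] (l::nat) = \<one>" and d: "int l dvd i"
  shows "x [^] (i::int) = \<one>"
  using pow_mod_l[OF x l, of i] d by simp

lemma odd_sq_one:
  assumes x: "x \<in> carrier G" and l: "x [^] (l::nat) = \<one>" and o: "odd l" and sq: "x \<otimes> x = \<one>"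
  shows "x = \<one>"
proof -
  obtain m where m: "l = 2 * m + 1" using o oddE by blast
  have x2: "x [^] (2::int) = \<one>"
    using int_pow_mult[OF x, of 1 1] x sq by simp
  have "\<one> = x [^] (int l)" using l by (simp add: int_pow_int)
  also have "... = x [^] (2 * int m + 1)" using m by (simp add: ac_simps)
  also have "... = (x [^] (2::int)) [^] (int m) \<otimes> x"
    using x by (simp add: int_pow_mult int_pow_pow)
  also have "... = x" using x x2 by simp
  finally show ?thesis by simp
qed

end

context comm_group begin

lemma finprod_int_pow:
  assumes "finite S" "f \<in> S \<rightarrow> carrier G"
  shows "(finprod G f S) [^] (n::int) = finprod G (\<lambda>i. f i [^] n) S"
  using assms
proof (induction S rule: finite_induct)
  case empty
  then show ?case by simp
next
  case (insert x F)
  have "(\<lambda>i. f i [^] n) \<in> F \<rightarrow> carrier G" using insert by auto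
  then show ?case using insert by (simp add: int_pow_distrib)
qed

lemma gfinprod_finite_superset:
  assumes "finite S" "S \<subseteq> I" "\<And>i. i \<in> I - S \<Longrightarrow> f i = \<one>" "f \<in> I \<rightarrow> carrier G"
  shows "gfinprod G f I = finprod G f S"
proof -
  have "gfinprod G f S = gfinprod G f I"
    by (rule gfinprod_mono_neutral_cong_left) (use assms in auto)
  moreover have "gfinprod G f S = finprod G f S"
    using assms by (intro gfinprod_eq_finprod) auto
  ultimately show ?thesis by simp
qed

end

lemma hom_finprod_gen:
  assumes G: "comm_group G" and H: "comm_group H" and h: "h \<in> hom G H"
    and S: "finite S" and f: "f \<in> S \<rightarrow> carrier G"
  shows "h (finprod G f S) = finprod H (\<lambda>i. h (f i)) S"
proof -
  interpret G: comm_group G by fact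
  interpret H: comm_group H by fact
  interpret gh: group_hom G H h
    by (simp add: group_hom_def group_hom_axioms_def G.group_axioms H.group_axioms h)
  show ?thesis
  using S f
  proof (induction S rule: finite_induct)
    case empty
    then show ?case by simp
  next
    case (insert x F)
    have fx: "f x \<in> carrier G" and fF: "f \<in> F \<rightarrow> carrier G" using insert by auto
    have hc: "(\<lambda>i. h (f i)) \<in> F \<rightarrow> carrier H" using fF gh.hom_closed by (auto simp: Pi_def)
    have "h (finprod G f (insert x F)) = h (f x \<otimes>\<^bsub>G\<^esub> finprod G f F)"
      using insert by simp
    also have "... = h (f x) \<otimes>\<^bsub>H\<^esub> h (finprod G f F)"
      using fx fF by simp
    also have "... = finprod H (\<lambda>i. h (f i)) (insert x F)"
      using insert hc fF fx by simp
    finally show ?case .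
  qed
qed

definition gindep :: "('a, 'm) monoid_scheme \<Rightarrow> nat \<Rightarrow> 'a set \<Rightarrow> bool" where
  "gindep G l B \<longleftrightarrow> (\<forall>S c. finite S \<longrightarrow> S \<subseteq> B \<longrightarrow>
      finprod G (\<lambda>b. b [^]\<^bsub>G\<^esub> (c b :: int)) S = \<one>\<^bsub>G\<^esub> \<longrightarrow> (\<forall>b\<in>S. int l dvd c b))"

definition gspan :: "('a, 'm) monoid_scheme \<Rightarrow> 'a set \<Rightarrow> 'a set" where
  "gspan G B = {finprod G (\<lambda>b. b [^]\<^bsub>G\<^esub> (c b :: int)) S | S c. finite S \<and> S \<subseteq> B}"

lemma gspan_intro:
  "finite S \<Longrightarrow> S \<subseteq> B \<Longrightarrow> finprod G (\<lambda>b. b [^]\<^bsub>G\<^esub> (c b :: int)) S \<in> gspan G B"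
  unfolding gspan_def by blast

lemma basis_exists:
  fixes G (structure)
  assumes G: "comm_group G" and l: "Factorial_Ring.prime l" and ex: "\<forall>x\<in>carrier G. x [^]\<^bsub>G\<^esub> l = \<one>\<^bsub>G\<^esub>"
    and V: "subgroup V G"
  shows "\<exists>B \<subseteq> V. gindep G l B \<and> V \<subseteq> gspan G B"
proof -
  interpret comm_group G by fact
  have Vc: "V \<subseteq> carrier G" using V by (rule subgroup.subset)
  define A where "A = {B. B \<subseteq> V \<and> gindep G l B}"
  have "\<exists>Z\<in>A. \<forall>Y\<in>A. Z \<subseteq> Y \<longrightarrow> Y = Z"
  proof (rule subset_Zorn')
    fix C assume ch: "subset.chain A C"
    then have CA: "C \<subseteq> A" and chain: "\<forall>x\<in>C. \<forall>y\<in>C. x \<subseteq> y \<or> y \<subseteq> x"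
      by (auto simp: subset.chain_def)
    note CA = CA[unfolded A_def]
    have "\<Union>C \<subseteq> V" using CA by auto
    moreover have "gindep G l (\<Union>C)"
      unfolding gindep_def
    proof (intro allI impI)
      fix S c assume S: "finite S" "S \<subseteq> \<Union>C"
        and p: "finprod G (\<lambda>b. b [^] (c b :: int)) S = \<one>"
      show "\<forall>b\<in>S. int l dvd c b"
      proof (cases "C = {}")
        case True then show ?thesis using S by auto
      next
        case False
        then obtain B where "B \<in> C" "S \<subseteq> B"
          using finite_subset_Union_chain[OF S(1) S(2) False ch] by blast
        then show ?thesis using CA p S unfolding gindep_def by blast
      qed
    qed
    ultimately show "\<Union>C \<in> A" by (simp add: A_def)
  qed
  then obtain B where BA: "B \<in> A" and max: "\<And>Y. Y \<in> A \<Longrightarrow> B \<subseteq> Y \<Longrightarrow> Y = B" by blast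
  have BV: "B \<subseteq> V" and Bi: "gindep G l B" using BA by (auto simp: A_def)
  have "V \<subseteq> gspan G B"
  proof
    fix v assume vV: "v \<in> V"
    show "v \<in> gspan G B"
    proof (rule ccontr)
      assume nv: "v \<notin> gspan G B"
      have vc: "v \<in> carrier G" using vV Vc by auto
      have "gindep G l (insert v B)"
        unfolding gindep_def
      proof (intro allI impI)
        fix S c assume S: "finite S" "S \<subseteq> insert v B"
          and p: "finprod G (\<lambda>b. b [^] (c b :: int)) S = \<one>"
        show "\<forall>b\<in>S. int l dvd c b"
        proof (cases "v \<in> S")
          case False
          then have "S \<subseteq> B" using S by auto
          then show ?thesis using Bi S p unfolding gindep_def by blast
        next
          case True
          define S' where "S' = S - {v}"
          have S'B: "S' \<subseteq> B" and fS': "finite S'" and vS': "v \<notin> S'"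
            using S by (auto simp: S'_def)
          have SS: "S = insert v S'" using True by (auto simp: S'_def)
          have carS': "(\<lambda>b. b [^] (c b :: int)) \<in> S' \<rightarrow> carrier G"
            using S'B BV Vc by auto
          have carS'b: "(\<lambda>b. b) \<in> S' \<rightarrow> carrier G"
            using S'B BV Vc by auto
          define P where "P = finprod G (\<lambda>b. b [^] (c b :: int)) S'"
          have Pc: "P \<in> carrier G" unfolding P_def using carS' by simp
          have eq: "v [^] c v \<otimes> P = \<one>"
            using p carS' vc fS' vS' by (simp add: SS P_def)
          have dv: "int l dvd c v"
          proof (rule ccontr)
            assume nd: "\<not> int l dvd c v"
            have pl: "Factorial_Ring.prime (int l)" using l by simp
            have "coprime (int l) (c v)" using prime_imp_coprime[OF pl nd] .
            then have g1: "gcd (c v) (int l) = 1" by (simp add: gcd.commute coprime_iff_gcd_eq_1)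
            obtain u w where uw: "u * c v + w * int l = gcd (c v) (int l)"
              using bezout_int by blast
            with g1 have uw1: "u * c v + w * int l = 1" by simp
            have vl: "v [^] (int l) = \<one>" using ex vc by (simp add: int_pow_int)
            have "v = v [^] (u * c v + w * int l)" using uw1 vc by simp
            also have "... = (v [^] c v) [^] u \<otimes> (v [^] int l) [^] w"
              using vc by (simp add: int_pow_mult int_pow_pow mult.commute)
            also have "... = (v [^] c v) [^] u" using vl vc by simp
            also have "v [^] c v = inv P" using eq vc Pc
              by (metis int_pow_closed inv_equality)
            also have "(inv P) [^] u = P [^] (- u)" using Pc by (simp add: int_pow_inv int_pow_neg)
            also have "... = finprod G (\<lambda>b. (b [^] (c b)) [^] (- u)) S'"
              unfolding P_def using fS' carS' by (rule finprod_int_pow)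
            also have "... = finprod G (\<lambda>b. b [^] (c b * - u)) S'"
              using S'B BV Vc by (intro finprod_cong) (auto simp: int_pow_pow simp_implies_def subset_iff)
            finally have "v \<in> gspan G B"
              using gspan_intro[OF fS' S'B, where c="\<lambda>b. c b * - u" and G=G] by simp
            with nv show False by simp
          qed
          have "v [^] c v = \<one>" using pow_dvd_l ex vc dv by blast
          then have "P = \<one>" using eq Pc by simp
          then have "\<forall>b\<in>S'. int l dvd c b" using Bi fS' S'B unfolding gindep_def P_def by blast
          then show ?thesis using dv SS by auto
        qed
      qed
      moreover have "insert v B \<subseteq> V" using vV BV by auto
      ultimately have "insert v B = B" using max[of "insert v B"] by (auto simp: A_def)
      then have vB: "v \<in> B" by auto
      have "v = finprod G (\<lambda>b. b [^] ((\<lambda>_. 1::int) b)) {v}" using vc by simp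
      then have "v \<in> gspan G B" using gspan_intro[of "{v}" B G "\<lambda>_. 1"] vB by simp
      with nv show False by simp
    qed
  qed
  then show ?thesis using BV Bi by blast
qed



lemma zmod_comm_group:
  assumes "0 < l" shows "comm_group (zmod_group l)"
proof (rule comm_groupI)
  show "\<exists>y\<in>carrier (zmod_group l). y \<otimes>\<^bsub>zmod_group l\<^esub> x = \<one>\<^bsub>zmod_group l\<^esub>"
    if "x \<in> carrier (zmod_group l)" for x
  proof -
    have A: "(int l - x) mod int l \<in> carrier (zmod_group l)" using assms by (simp add: zmod_group_def)
    have B: "(int l - x) mod int l \<otimes>\<^bsub>zmod_group l\<^esub> x = \<one>\<^bsub>zmod_group l\<^esub>"
      by (simp add: zmod_group_def mod_add_left_eq)
    show ?thesis using A B by blast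
  qed
qed (use assms in \<open>auto simp: zmod_group_def mod_add_left_eq mod_add_right_eq ac_simps\<close>)

lemma trivial_comm_group: "comm_group trivial_group"
  by (rule comm_groupI) (auto simp: trivial_group_def)

lemma carrier_zmod [simp]: "carrier (zmod_group l) = {0..<int l}"
  and one_zmod [simp]: "\<one>\<^bsub>zmod_group l\<^esub> = 0"
  and mult_zmod [simp]: "x \<otimes>\<^bsub>zmod_group l\<^esub> y = (x + y) mod int l"
  by (simp_all add: zmod_group_def)

lemma carrier_triv [simp]: "carrier trivial_group = {0}"
  and one_triv [simp]: "\<one>\<^bsub>trivial_group\<^esub> = 0"
  and mult_triv [simp]: "x \<otimes>\<^bsub>trivial_group\<^esub> y = 0"
  by (simp_all add: trivial_group_def)

definition Fam :: "nat \<Rightarrow> ('p + 'q) \<Rightarrow> (int, int) mackey" where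
  "Fam l i = (case i of Inl _ \<Rightarrow> S_mackey l | Inr _ \<Rightarrow> H_mackey l)"

lemma theta_Fam [simp]: "theta (Fam l i) = zmod_group l"
  by (cases i) (simp_all add: Fam_def S_mackey_def H_mackey_def)

lemma Fam_Inl [simp]: "Fam l (Inl a) = S_mackey l" and Fam_Inr [simp]: "Fam l (Inr b) = H_mackey l"
  by (simp_all add: Fam_def)

lemma S_simps [simp]: "theta (S_mackey l) = zmod_group l" "bullet (S_mackey l) = trivial_group"
  "tw (S_mackey l) = (\<lambda>x. (- x) mod int l)" "res (S_mackey l) = (\<lambda>y. 0)" "tr (S_mackey l) = (\<lambda>x. 0)"
  by (simp_all add: S_mackey_def)

lemma H_simps [simp]: "theta (H_mackey l) = zmod_group l" "bullet (H_mackey l) = zmod_group l"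
  "tw (H_mackey l) = (\<lambda>x. x)" "res (H_mackey l) = (\<lambda>y. y)" "tr (H_mackey l) = (\<lambda>x. (2 * x) mod int l)"
  by (simp_all add: H_mackey_def)

lemma one_bullet_Fam [simp]: "\<one>\<^bsub>bullet (Fam l i)\<^esub> = 0"
  by (cases i) simp_all

lemma group_bullet_Fam: "0 < l \<Longrightarrow> group (bullet (Fam l i))"
  by (cases i) (simp_all add: trivial_comm_group zmod_comm_group comm_group.axioms(2))

lemma group_theta_Fam: "0 < l \<Longrightarrow> group (theta (Fam l i))"
  by (simp add: zmod_comm_group comm_group.axioms(2))

lemma mackey_sum_simps [simp]:
  "theta (mackey_sum I F) = sum_group I (\<lambda>i. theta (F i))"
  "bullet (mackey_sum I F) = sum_group I (\<lambda>i. bullet (F i))"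
  "tw (mackey_sum I F) = (\<lambda>x. \<lambda>i\<in>I. tw (F i) (x i))"
  "res (mackey_sum I F) = (\<lambda>y. \<lambda>i\<in>I. res (F i) (y i))"
  "tr (mackey_sum I F) = (\<lambda>x. \<lambda>i\<in>I. tr (F i) (x i))"
  by (simp_all add: mackey_sum_def)

lemma carrier_sumT:
  "0 < l \<Longrightarrow> carrier (sum_group I (\<lambda>i. zmod_group l)) =
     {x \<in> \<Pi>\<^sub>E i\<in>I. {0..<int l}. finite {i \<in> I. x i \<noteq> 0}}"
  by (subst carrier_sum_group) (simp_all add: zmod_comm_group comm_group.axioms(2))

lemma carrier_sumB:
  "0 < l \<Longrightarrow> carrier (sum_group I (\<lambda>i. bullet (Fam l i))) =
     {x \<in> \<Pi>\<^sub>E i\<in>I. carrier (bullet (Fam l i)). finite {i \<in> I. x i \<noteq> 0}}"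
  by (subst carrier_sum_group) (simp_all add: group_bullet_Fam)

lemma hom_zmod:
  fixes G (structure)
  assumes G: "group G" and w: "w \<in> carrier G" and wl: "w [^]\<^bsub>G\<^esub> l = \<one>\<^bsub>G\<^esub>"
  shows "(\<lambda>k::int. w [^]\<^bsub>G\<^esub> k) \<in> hom (zmod_group l) G"
proof -
  interpret group G by fact
  show ?thesis unfolding hom_def
  proof (intro CollectI conjI ballI)
    show "(\<lambda>k::int. w [^] k) \<in> carrier (zmod_group l) \<rightarrow> carrier G" using w by auto
    fix x y assume "x \<in> carrier (zmod_group l)" "y \<in> carrier (zmod_group l)"
    have "w [^] ((x + y) mod int l) = w [^] (x + y)" using pow_mod_l[OF w wl, of "x+y"] by simp
    also have "... = w [^] x \<otimes> w [^] y" using w by (simp add: int_pow_mult)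
    finally show "w [^] (x \<otimes>\<^bsub>zmod_group l\<^esub> y) = w [^] x \<otimes> w [^] y" by simp
  qed
qed

lemma hom_triv:
  assumes G: "group G"
  shows "(\<lambda>k::int. \<one>\<^bsub>G\<^esub>) \<in> hom trivial_group G"
  using G by (auto simp: hom_def group.is_monoid)

lemma gfinprod_hom:
  assumes G: "comm_group G" and H: "comm_group H" and h: "h \<in> hom G H"
    and f: "f \<in> I \<rightarrow> carrier G" and fin: "finite {i \<in> I. f i \<noteq> \<one>\<^bsub>G\<^esub>}"
  shows "h (gfinprod G f I) = gfinprod H (\<lambda>i. h (f i)) I"
proof -
  interpret G: comm_group G by fact
  interpret H: comm_group H by fact
  interpret gh: group_hom G H h
    by (simp add: group_hom_def group_hom_axioms_def G.group_axioms H.group_axioms h)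
  let ?S = "{i \<in> I. f i \<noteq> \<one>\<^bsub>G\<^esub>}"
  have "gfinprod G f I = finprod G f ?S"
    by (rule G.gfinprod_finite_superset) (use fin f in auto)
  moreover have "h (finprod G f ?S) = finprod H (\<lambda>i. h (f i)) ?S"
    by (rule hom_finprod_gen[OF G H h fin]) (use f in auto)
  moreover have "gfinprod H (\<lambda>i. h (f i)) I = finprod H (\<lambda>i. h (f i)) ?S"
    by (rule H.gfinprod_finite_superset) (use fin f in \<open>auto intro!: gh.hom_closed funcset_mem[OF f]\<close>)
  ultimately show ?thesis by simp
qed

locale zlm =
  fixes l :: nat and N :: "('c, 'd) mackey"
  assumes zl: "zl_module l N" and pr: "Factorial_Ring.prime l" and od: "odd l"
begin

lemma lpos: "0 < l" using pr prime_gt_0_nat by blast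

lemma T: "comm_group (theta N)" and Bu: "comm_group (bullet N)"
  and tw_hom: "tw N \<in> hom (theta N) (theta N)"
  and res_hom: "res N \<in> hom (bullet N) (theta N)"
  and tr_hom: "tr N \<in> hom (theta N) (bullet N)"
  and tw_res: "\<And>y. y \<in> carrier (bullet N) \<Longrightarrow> tw N (res N y) = res N y"
  and tr_tw: "\<And>x. x \<in> carrier (theta N) \<Longrightarrow> tr N (tw N x) = tr N x"
  and tw_tw: "\<And>x. x \<in> carrier (theta N) \<Longrightarrow> tw N (tw N x) = x"
  and res_tr: "\<And>x. x \<in> carrier (theta N) \<Longrightarrow> res N (tr N x) = x \<otimes>\<^bsub>theta N\<^esub> tw N x"
  and expT: "\<And>x. x \<in> carrier (theta N) \<Longrightarrow> x [^]\<^bsub>theta N\<^esub> l = \<one>\<^bsub>theta N\<^esub>"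
  and expB: "\<And>y. y \<in> carrier (bullet N) \<Longrightarrow> y [^]\<^bsub>bullet N\<^esub> l = \<one>\<^bsub>bullet N\<^esub>"
  and tr_res: "\<And>y. y \<in> carrier (bullet N) \<Longrightarrow> tr N (res N y) = y \<otimes>\<^bsub>bullet N\<^esub> y"
  using zl unfolding zl_module_def is_mackey_def by auto

sublocale T: comm_group "theta N" by (rule T)
sublocale Bu: comm_group "bullet N" by (rule Bu)
sublocale twh: group_hom "theta N" "theta N" "tw N"
  by (simp add: group_hom_def group_hom_axioms_def T.group_axioms tw_hom)
sublocale resh: group_hom "bullet N" "theta N" "res N"
  by (simp add: group_hom_def group_hom_axioms_def T.group_axioms Bu.group_axioms res_hom)
sublocale trh: group_hom "theta N" "bullet N" "tr N"
  by (simp add: group_hom_def group_hom_axioms_def T.group_axioms Bu.group_axioms tr_hom)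

definition Mminus :: "'c set" where
  "Mminus = {x \<in> carrier (theta N). tw N x = inv\<^bsub>theta N\<^esub> x}"

lemma tr_minus:
  assumes "x \<in> Mminus" shows "tr N x = \<one>\<^bsub>bullet N\<^esub>"
proof -
  have x: "x \<in> carrier (theta N)" and t: "tw N x = inv\<^bsub>theta N\<^esub> x" using assms by (auto simp: Mminus_def)
  have "tr N x = tr N (inv\<^bsub>theta N\<^esub> x)" using tr_tw[OF x] t by simp
  also have "... = inv\<^bsub>bullet N\<^esub> (tr N x)" using x by simp
  finally have e: "tr N x = inv\<^bsub>bullet N\<^esub> (tr N x)" .
  have c: "tr N x \<in> carrier (bullet N)" using x by simp
  have "tr N x \<otimes>\<^bsub>bullet N\<^esub> tr N x = \<one>\<^bsub>bullet N\<^esub>"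
    using e c by (metis Bu.r_inv)
  then show ?thesis using Bu.odd_sq_one[OF c expB[OF c] od] by simp
qed

end



context zlm begin

definition wv :: "('p \<Rightarrow> 'c) \<Rightarrow> ('q \<Rightarrow> 'd) \<Rightarrow> 'p + 'q \<Rightarrow> 'c" where
  "wv \<alpha> \<beta> i = (case i of Inl a \<Rightarrow> \<alpha> a | Inr b \<Rightarrow> res N (\<beta> b))"

definition uv :: "('q \<Rightarrow> 'd) \<Rightarrow> 'p + 'q \<Rightarrow> 'd" where
  "uv \<beta> i = (case i of Inl a \<Rightarrow> \<one>\<^bsub>bullet N\<^esub> | Inr b \<Rightarrow> \<beta> b)"

definition PsiT :: "('p + 'q) set \<Rightarrow> ('p \<Rightarrow> 'c) \<Rightarrow> ('q \<Rightarrow> 'd) \<Rightarrow> ('p + 'q \<Rightarrow> int) \<Rightarrow> 'c" where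
  "PsiT I \<alpha> \<beta> = (\<lambda>x. gfinprod (theta N) (\<lambda>i. wv \<alpha> \<beta> i [^]\<^bsub>theta N\<^esub> (x i)) I)"

definition PsiB :: "('p + 'q) set \<Rightarrow> ('q \<Rightarrow> 'd) \<Rightarrow> ('p + 'q \<Rightarrow> int) \<Rightarrow> 'd" where
  "PsiB I \<beta> = (\<lambda>y. gfinprod (bullet N) (\<lambda>i. uv \<beta> i [^]\<^bsub>bullet N\<^esub> (y i)) I)"

lemma wv_Inl [simp]: "wv \<alpha> \<beta> (Inl a) = \<alpha> a" and wv_Inr [simp]: "wv \<alpha> \<beta> (Inr b) = res N (\<beta> b)"
  by (simp_all add: wv_def)
lemma uv_Inl [simp]: "uv \<beta> (Inl a) = \<one>\<^bsub>bullet N\<^esub>" and uv_Inr [simp]: "uv \<beta> (Inr b) = \<beta> b"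
  by (simp_all add: uv_def)

lemma Mminus_carrier: "x \<in> Mminus \<Longrightarrow> x \<in> carrier (theta N)"
  by (simp add: Mminus_def)

lemma fin_supp:
  assumes "finite {i \<in> I. x i \<noteq> (0::int)}" "\<And>i. i \<in> I \<Longrightarrow> x i = 0 \<Longrightarrow> f i = u"
  shows "finite {i \<in> I. f i \<noteq> u}"
  by (rule finite_subset[OF _ assms(1)]) (use assms(2) in auto)

context
  fixes I :: "('p + 'q) set" and \<alpha> :: "'p \<Rightarrow> 'c" and \<beta> :: "'q \<Rightarrow> 'd"
  assumes am: "\<And>a. Inl a \<in> I \<Longrightarrow> \<alpha> a \<in> Mminus"
    and bc: "\<And>b. Inr b \<in> I \<Longrightarrow> \<beta> b \<in> carrier (bullet N)"
begin

lemma wv_carrier: "i \<in> I \<Longrightarrow> wv \<alpha> \<beta> i \<in> carrier (theta N)"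
  by (cases i) (auto dest: am bc simp: Mminus_carrier)

lemma uv_carrier: "i \<in> I \<Longrightarrow> uv \<beta> i \<in> carrier (bullet N)"
  by (cases i) (auto dest: bc)

lemma PsiT_hom: "PsiT I \<alpha> \<beta> \<in> hom (sum_group I (\<lambda>i. zmod_group l)) (theta N)"
proof -
  have "(\<lambda>x. gfinprod (theta N) (\<lambda>i. (\<lambda>k::int. wv \<alpha> \<beta> i [^]\<^bsub>theta N\<^esub> k) (x i)) I)
        \<in> hom (sum_group I (\<lambda>i. zmod_group l)) (theta N)"
    by (rule T.hom_group_sum)
      (auto intro!: hom_zmod T.group_axioms wv_carrier expT simp: zmod_comm_group lpos comm_group.axioms(2))
  then show ?thesis by (simp add: PsiT_def)
qed

lemma PsiB_hom: "PsiB I \<beta> \<in> hom (sum_group I (\<lambda>i. bullet (Fam l i))) (bullet N)"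
proof -
  have "(\<lambda>x. gfinprod (bullet N) (\<lambda>i. (\<lambda>k::int. uv \<beta> i [^]\<^bsub>bullet N\<^esub> k) (x i)) I)
        \<in> hom (sum_group I (\<lambda>i. bullet (Fam l i))) (bullet N)"
  proof (rule Bu.hom_group_sum)
    fix i assume i: "i \<in> I"
    show "group (bullet (Fam l i))" by (rule group_bullet_Fam[OF lpos])
    show "(\<lambda>k::int. uv \<beta> i [^]\<^bsub>bullet N\<^esub> k) \<in> hom (bullet (Fam l i)) (bullet N)"
    proof (cases i)
      case (Inl a)
      then show ?thesis using hom_triv[OF Bu.group_axioms] by simp
    next
      case (Inr b)
      then show ?thesis using i bc
        by (auto intro!: hom_zmod Bu.group_axioms expB)
    qed
  qed
  then show ?thesis by (simp add: PsiB_def)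
qed

lemma comp_tw:
  assumes i: "i \<in> I" and k: "k \<in> {0..<int l}"
  shows "wv \<alpha> \<beta> i [^]\<^bsub>theta N\<^esub> (tw (Fam l i) k) = tw N (wv \<alpha> \<beta> i [^]\<^bsub>theta N\<^esub> k)"
proof (cases i)
  case (Inl a)
  have a: "\<alpha> a \<in> carrier (theta N)" and ta: "tw N (\<alpha> a) = inv\<^bsub>theta N\<^esub> (\<alpha> a)"
    using am[of a] i Inl by (auto simp: Mminus_def)
  have "\<alpha> a [^]\<^bsub>theta N\<^esub> ((- k) mod int l) = \<alpha> a [^]\<^bsub>theta N\<^esub> (- k)"
    using T.pow_mod_l[OF a expT[OF a], of "-k"] by simp
  also have "... = inv\<^bsub>theta N\<^esub> (\<alpha> a [^]\<^bsub>theta N\<^esub> k)" using a by (simp add: T.int_pow_neg)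
  also have "... = tw N (\<alpha> a [^]\<^bsub>theta N\<^esub> k)" using a ta by (simp add: twh.hom_int_pow T.int_pow_inv)
  finally show ?thesis using Inl by simp
next
  case (Inr b)
  have b: "res N (\<beta> b) \<in> carrier (theta N)" and bb: "\<beta> b \<in> carrier (bullet N)"
    using bc[of b] i Inr by auto
  show ?thesis using Inr b bb by (simp add: twh.hom_int_pow tw_res)
qed

lemma comp_res:
  assumes i: "i \<in> I" and k: "k \<in> carrier (bullet (Fam l i))"
  shows "wv \<alpha> \<beta> i [^]\<^bsub>theta N\<^esub> (res (Fam l i) k) = res N (uv \<beta> i [^]\<^bsub>bullet N\<^esub> k)"
proof (cases i)
  case (Inl a)
  then show ?thesis by simp
next
  case (Inr b)
  have bb: "\<beta> b \<in> carrier (bullet N)" using bc[of b] i Inr by auto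
  show ?thesis using Inr bb by (simp add: resh.hom_int_pow)
qed

lemma comp_tr:
  assumes i: "i \<in> I" and k: "k \<in> {0..<int l}"
  shows "uv \<beta> i [^]\<^bsub>bullet N\<^esub> (tr (Fam l i) k) = tr N (wv \<alpha> \<beta> i [^]\<^bsub>theta N\<^esub> k)"
proof (cases i)
  case (Inl a)
  have a: "\<alpha> a \<in> carrier (theta N)" and am': "\<alpha> a \<in> Mminus"
    using am[of a] i Inl by (auto simp: Mminus_def)
  show ?thesis using Inl a tr_minus[OF am'] by (simp add: trh.hom_int_pow)
next
  case (Inr b)
  have bb: "\<beta> b \<in> carrier (bullet N)" using bc[of b] i Inr by auto
  have sq: "\<beta> b \<otimes>\<^bsub>bullet N\<^esub> \<beta> b = \<beta> b [^]\<^bsub>bullet N\<^esub> (2::int)"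
    using Bu.int_pow_mult[OF bb, of 1 1] bb by simp
  have "\<beta> b [^]\<^bsub>bullet N\<^esub> ((2 * k) mod int l) = \<beta> b [^]\<^bsub>bullet N\<^esub> (2 * k)"
    using Bu.pow_mod_l[OF bb expB[OF bb], of "2*k"] by simp
  also have "... = (\<beta> b \<otimes>\<^bsub>bullet N\<^esub> \<beta> b) [^]\<^bsub>bullet N\<^esub> k"
    using sq bb by (simp add: Bu.int_pow_pow)
  also have "... = tr N (res N (\<beta> b) [^]\<^bsub>theta N\<^esub> k)"
    using bb by (simp add: trh.hom_int_pow tr_res)
  finally show ?thesis using Inr by simp
qed

lemma Psi_mackey_hom: "mackey_hom (mackey_sum I (Fam l)) N (PsiT I \<alpha> \<beta>, PsiB I \<beta>)"
  unfolding mackey_hom_def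
proof (intro conjI ballI)
  show "fst (PsiT I \<alpha> \<beta>, PsiB I \<beta>) \<in> hom (theta (mackey_sum I (Fam l))) (theta N)"
    using PsiT_hom by simp
  show "snd (PsiT I \<alpha> \<beta>, PsiB I \<beta>) \<in> hom (bullet (mackey_sum I (Fam l))) (bullet N)"
    using PsiB_hom by simp
next
  fix x assume "x \<in> carrier (theta (mackey_sum I (Fam l)))"
  then have x: "x \<in> (\<Pi>\<^sub>E i\<in>I. {0..<int l})" and fx: "finite {i \<in> I. x i \<noteq> 0}"
    by (auto simp: carrier_sumT[OF lpos])
  have xi: "\<And>i. i \<in> I \<Longrightarrow> x i \<in> {0..<int l}" using x by auto
  have fin1: "finite {i \<in> I. wv \<alpha> \<beta> i [^]\<^bsub>theta N\<^esub> x i \<noteq> \<one>\<^bsub>theta N\<^esub>}"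
    by (rule fin_supp[OF fx]) simp
  have c1: "(\<lambda>i. wv \<alpha> \<beta> i [^]\<^bsub>theta N\<^esub> x i) \<in> I \<rightarrow> carrier (theta N)"
    using wv_carrier by auto
  have "PsiT I \<alpha> \<beta> (\<lambda>i\<in>I. tw (Fam l i) (x i))
      = gfinprod (theta N) (\<lambda>i. tw N (wv \<alpha> \<beta> i [^]\<^bsub>theta N\<^esub> x i)) I"
    unfolding PsiT_def
    by (rule T.gfinprod_cong) (use wv_carrier xi comp_tw in \<open>auto simp: simp_implies_def\<close>)
  also have "... = tw N (PsiT I \<alpha> \<beta> x)"
    unfolding PsiT_def
    by (rule gfinprod_hom[OF T T tw_hom c1 fin1, symmetric])
  finally show "fst (PsiT I \<alpha> \<beta>, PsiB I \<beta>) (tw (mackey_sum I (Fam l)) x) =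
         tw N (fst (PsiT I \<alpha> \<beta>, PsiB I \<beta>) x)" by simp
  have fin2: "finite {i \<in> I. tr N (wv \<alpha> \<beta> i [^]\<^bsub>theta N\<^esub> x i) \<noteq> \<one>\<^bsub>bullet N\<^esub>}"
    by (rule fin_supp[OF fx]) simp
  have "PsiB I \<beta> (\<lambda>i\<in>I. tr (Fam l i) (x i))
      = gfinprod (bullet N) (\<lambda>i. tr N (wv \<alpha> \<beta> i [^]\<^bsub>theta N\<^esub> x i)) I"
    unfolding PsiB_def
    by (rule Bu.gfinprod_cong) (use uv_carrier xi comp_tr in \<open>auto simp: simp_implies_def\<close>)
  also have "... = tr N (PsiT I \<alpha> \<beta> x)"
    unfolding PsiT_def
    by (rule gfinprod_hom[OF T Bu tr_hom c1 fin1, symmetric])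
  finally show "snd (PsiT I \<alpha> \<beta>, PsiB I \<beta>) (tr (mackey_sum I (Fam l)) x) =
         tr N (fst (PsiT I \<alpha> \<beta>, PsiB I \<beta>) x)" by simp
next
  fix y assume "y \<in> carrier (bullet (mackey_sum I (Fam l)))"
  then have y: "y \<in> (\<Pi>\<^sub>E i\<in>I. carrier (bullet (Fam l i)))" and fy: "finite {i \<in> I. y i \<noteq> 0}"
    by (auto simp: carrier_sumB[OF lpos])
  have yi: "\<And>i. i \<in> I \<Longrightarrow> y i \<in> carrier (bullet (Fam l i))" using y by auto
  have fin1: "finite {i \<in> I. uv \<beta> i [^]\<^bsub>bullet N\<^esub> y i \<noteq> \<one>\<^bsub>bullet N\<^esub>}"
    by (rule fin_supp[OF fy]) simp
  have c1: "(\<lambda>i. uv \<beta> i [^]\<^bsub>bullet N\<^esub> y i) \<in> I \<rightarrow> carrier (bullet N)"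
    using uv_carrier by auto
  have "PsiT I \<alpha> \<beta> (\<lambda>i\<in>I. res (Fam l i) (y i))
      = gfinprod (theta N) (\<lambda>i. res N (uv \<beta> i [^]\<^bsub>bullet N\<^esub> y i)) I"
    unfolding PsiT_def
    by (rule T.gfinprod_cong) (use wv_carrier yi comp_res in \<open>auto simp: simp_implies_def\<close>)
  also have "... = res N (PsiB I \<beta> y)"
    unfolding PsiB_def
    by (rule gfinprod_hom[OF Bu T res_hom c1 fin1, symmetric])
  finally show "fst (PsiT I \<alpha> \<beta>, PsiB I \<beta>) (res (mackey_sum I (Fam l)) y) =
         res N (snd (PsiT I \<alpha> \<beta>, PsiB I \<beta>) y)" by simp
qed

end

end



lemma (in comm_group) gfinprod_split:
  assumes f: "f \<in> I \<rightarrow> carrier G" and Sa: "finite Sa" and Sb: "finite Sb"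
    and sub: "Inl ` Sa \<union> Inr ` Sb \<subseteq> I"
    and van: "\<And>i. i \<in> I - (Inl ` Sa \<union> Inr ` Sb) \<Longrightarrow> f i = \<one>"
  shows "gfinprod G f I = finprod G (\<lambda>a. f (Inl a)) Sa \<otimes> finprod G (\<lambda>b. f (Inr b)) Sb"
proof -
  have "gfinprod G f I = finprod G f (Inl ` Sa \<union> Inr ` Sb)"
    by (rule gfinprod_finite_superset) (use Sa Sb sub van f in auto)
  also have "... = finprod G f (Inl ` Sa) \<otimes> finprod G f (Inr ` Sb)"
    by (rule finprod_Un_disjoint) (use Sa Sb sub f in auto)
  also have "finprod G f (Inl ` Sa) = finprod G (\<lambda>a. f (Inl a)) Sa"
    by (rule finprod_reindex) (use sub f in auto)
  also have "finprod G f (Inr ` Sb) = finprod G (\<lambda>b. f (Inr b)) Sb"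
    by (rule finprod_reindex) (use sub f in auto)
  finally show ?thesis .
qed

lemma (in comm_group) subgroup_finprod:
  assumes H: "subgroup H G" and S: "finite S" and f: "f \<in> S \<rightarrow> H"
  shows "finprod G f S \<in> H"
  using S f
proof (induction S rule: finite_induct)
  case empty
  then show ?case using H by (simp add: subgroup.one_closed)
next
  case (insert x F)
  have Hc: "H \<subseteq> carrier G" using H by (rule subgroup.subset)
  have "f \<in> F \<rightarrow> carrier G" "f x \<in> carrier G" using insert Hc by auto
  then show ?case using insert H by (simp add: subgroup.m_closed)
qed

lemma (in group) subgroup_int_pow:
  assumes H: "subgroup H G" and x: "x \<in> H"
  shows "x [^] (k::int) \<in> H"
proof -
  have xc: "x \<in> carrier G" using H x subgroup.subset by blast
  have n: "x [^] (n::nat) \<in> H" for n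
    by (induction n) (simp_all add: subgroup.one_closed[OF H] subgroup.m_closed[OF H] x)
  show ?thesis
  proof (cases "k < 0")
    case True
    have e: "x [^] k = (if k < 0 then inv (x [^] (nat (-k))) else x [^] (nat k))" by (rule int_pow_def2)
    have "inv (x [^] (nat (-k))) \<in> H" by (rule subgroup.m_inv_closed[OF H n])
    then show ?thesis using e True by metis
  next
    case False
    have e: "x [^] k = (if k < 0 then inv (x [^] (nat (-k))) else x [^] (nat k))" by (rule int_pow_def2)
    have "x [^] (nat k) \<in> H" by (rule n)
    then show ?thesis using e False by metis
  qed
qed

context zlm begin

lemma Mminus_subgroup: "subgroup Mminus (theta N)"
proof (rule T.subgroupI)
  show "Mminus \<subseteq> carrier (theta N)" by (auto simp: Mminus_def)
  have "\<one>\<^bsub>theta N\<^esub> \<in> Mminus" unfolding Mminus_def by simp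
  then show "Mminus \<noteq> {}" by blast
  show "inv\<^bsub>theta N\<^esub> a \<in> Mminus" if "a \<in> Mminus" for a
  proof -
    have a: "a \<in> carrier (theta N)" "tw N a = inv\<^bsub>theta N\<^esub> a" using that by (auto simp: Mminus_def)
    have "tw N (inv\<^bsub>theta N\<^esub> a) = inv\<^bsub>theta N\<^esub> (tw N a)" using a by simp
    then show ?thesis using a unfolding Mminus_def by simp
  qed
  show "a \<otimes>\<^bsub>theta N\<^esub> b \<in> Mminus" if "a \<in> Mminus" "b \<in> Mminus" for a b
  proof -
    have a: "a \<in> carrier (theta N)" "tw N a = inv\<^bsub>theta N\<^esub> a"
      and b: "b \<in> carrier (theta N)" "tw N b = inv\<^bsub>theta N\<^esub> b" using that by (auto simp: Mminus_def)
    have "tw N (a \<otimes>\<^bsub>theta N\<^esub> b) = inv\<^bsub>theta N\<^esub> a \<otimes>\<^bsub>theta N\<^esub> inv\<^bsub>theta N\<^esub> b"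
      using a b by simp
    also have "... = inv\<^bsub>theta N\<^esub> (a \<otimes>\<^bsub>theta N\<^esub> b)" using a b by (simp add: T.inv_mult)
    finally show ?thesis using a b unfolding Mminus_def by simp
  qed
qed

lemma dvd_range_zero:
  assumes "int l dvd z" "0 \<le> z" "z < int l" shows "z = 0"
proof (rule ccontr)
  assume "z \<noteq> 0"
  then have "0 < z" using assms(2) by simp
  from zdvd_not_zless[OF this assms(3)] assms(1) show False by simp
qed

lemma bases_exist:
  "\<exists>Bm Bb. Bm \<subseteq> Mminus \<and> gindep (theta N) l Bm \<and> Mminus \<subseteq> gspan (theta N) Bm \<and>
     Bb \<subseteq> carrier (bullet N) \<and> gindep (bullet N) l Bb \<and> carrier (bullet N) \<subseteq> gspan (bullet N) Bb"
proof -
  obtain Bm where "Bm \<subseteq> Mminus" "gindep (theta N) l Bm" "Mminus \<subseteq> gspan (theta N) Bm"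
    using basis_exists[OF T pr _ Mminus_subgroup] expT by blast
  moreover obtain Bb where "Bb \<subseteq> carrier (bullet N)" "gindep (bullet N) l Bb" "carrier (bullet N) \<subseteq> gspan (bullet N) Bb"
    using basis_exists[OF Bu pr _ Bu.subgroup_self] expB by blast
  ultimately show ?thesis by blast
qed

context
  fixes Bm :: "'c set" and Bb :: "'d set"
  assumes Bm: "Bm \<subseteq> Mminus" and im: "gindep (theta N) l Bm" and sm: "Mminus \<subseteq> gspan (theta N) Bm"
    and Bb: "Bb \<subseteq> carrier (bullet N)" and ib: "gindep (bullet N) l Bb" and sb: "carrier (bullet N) \<subseteq> gspan (bullet N) Bb"
begin

abbreviation "I0 \<equiv> Inl ` Bm \<union> Inr ` Bb"

lemma wv0: "i \<in> I0 \<Longrightarrow> wv id id i \<in> carrier (theta N)"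
  by (rule wv_carrier[where I=I0 and \<alpha>=id and \<beta>=id]) (use Bm Bb in auto)
lemma uv0: "i \<in> I0 \<Longrightarrow> uv id i \<in> carrier (bullet N)"
  by (rule uv_carrier[where I=I0 and \<alpha>=id and \<beta>=id]) (use Bm Bb in auto)
lemma Psi0_hom: "mackey_hom (mackey_sum I0 (Fam l)) N (PsiT I0 id id, PsiB I0 id)"
  by (rule Psi_mackey_hom) (use Bm Bb in auto)

lemma PsiB_ker:
  assumes y: "y \<in> carrier (sum_group I0 (\<lambda>i. bullet (Fam l i)))"
    and y1: "PsiB I0 id y = \<one>\<^bsub>bullet N\<^esub>"
  shows "y = \<one>\<^bsub>sum_group I0 (\<lambda>i. bullet (Fam l i))\<^esub>"
proof -
  have ys: "y \<in> {x \<in> (\<Pi>\<^sub>E i\<in>I0. carrier (bullet (Fam l i))). finite {i \<in> I0. x i \<noteq> 0}}"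
    using y carrier_sumB[OF lpos, of I0] by (simp only:)
  then have yE: "y \<in> (\<Pi>\<^sub>E i\<in>I0. carrier (bullet (Fam l i)))" and fy: "finite {i \<in> I0. y i \<noteq> 0}"
    by (simp_all only: mem_Collect_eq)
  have yall: "\<forall>i\<in>I0. y i \<in> carrier (bullet (Fam l i))" using yE unfolding PiE_iff by (rule conjunct1)
  define T2 where "T2 = Inr -` {i \<in> I0. y i \<noteq> 0}"
  have fT2: "finite T2" unfolding T2_def by (rule finite_vimageI[OF fy]) simp
  have T2B: "T2 \<subseteq> Bb" unfolding T2_def by blast
  have c1: "(\<lambda>i. uv id i [^]\<^bsub>bullet N\<^esub> y i) \<in> I0 \<rightarrow> carrier (bullet N)"
    using uv0 by auto
  have sub: "Inl ` ({}::'c set) \<union> Inr ` T2 \<subseteq> I0" by (auto simp: T2_def)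
  have van: "uv id i [^]\<^bsub>bullet N\<^esub> y i = \<one>\<^bsub>bullet N\<^esub>"
    if i: "i \<in> I0 - (Inl ` ({}::'c set) \<union> Inr ` T2)" for i
  proof (cases i)
    case (Inl a) then show ?thesis by simp
  next
    case (Inr b) then have "y i = 0" using i by (auto simp: T2_def)
    then show ?thesis by simp
  qed
  have "PsiB I0 id y = finprod (bullet N) (\<lambda>a. uv id (Inl a) [^]\<^bsub>bullet N\<^esub> y (Inl a)) ({}::'c set)
      \<otimes>\<^bsub>bullet N\<^esub> finprod (bullet N) (\<lambda>b. uv id (Inr b) [^]\<^bsub>bullet N\<^esub> y (Inr b)) T2"
    unfolding PsiB_def using Bu.gfinprod_split[OF c1 _ fT2 sub van] by simp
  moreover have fc: "finprod (bullet N) (\<lambda>b. b [^]\<^bsub>bullet N\<^esub> y (Inr b)) T2 \<in> carrier (bullet N)"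
    using T2B Bb by (intro Bu.finprod_closed) auto
  ultimately have p1: "finprod (bullet N) (\<lambda>b. b [^]\<^bsub>bullet N\<^esub> y (Inr b)) T2 = \<one>\<^bsub>bullet N\<^esub>"
    using y1 T2B Bb by simp
  have "\<forall>b\<in>T2. int l dvd y (Inr b)"
    using ib[unfolded gindep_def, rule_format, OF fT2 T2B, of "\<lambda>b. y (Inr b)"] p1 by simp
  then have "T2 = {}"
  proof -
    assume d: "\<forall>b\<in>T2. int l dvd y (Inr b)"
    { fix b assume b: "b \<in> T2"
      then have "Inr b \<in> I0" by (auto simp: T2_def)
      then have "y (Inr b) \<in> carrier (bullet (Fam l (Inr b :: 'c + 'd)))" by (rule bspec[OF yall])
      then have "y (Inr b) \<in> {0..<int l}" by simp
      then have "y (Inr b) = 0" using d b dvd_range_zero by auto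
      with b have False by (auto simp: T2_def) }
    then show ?thesis by blast
  qed
  have "\<And>i. i \<in> I0 \<Longrightarrow> y i = 0"
  proof -
    fix i assume i: "i \<in> I0"
    show "y i = 0"
    proof (cases i)
      case (Inl a) then show ?thesis using bspec[OF yall i] by simp
    next
      case (Inr b) then show ?thesis using \<open>T2 = {}\<close> i by (auto simp: T2_def)
    qed
  qed
  then have "y = (\<lambda>i\<in>I0. 0)" using yE unfolding PiE_iff extensional_def by (intro ext) auto
  then show ?thesis by simp
qed

lemma gspan_elim:
  assumes "z \<in> gspan G B"
  obtains S c where "finite S" "S \<subseteq> B" "z = finprod G (\<lambda>b. b [^]\<^bsub>G\<^esub> (c b :: int)) S"
  using assms unfolding gspan_def by blast

lemma PsiB_surj:
  assumes z: "z \<in> carrier (bullet N)"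
  shows "\<exists>y \<in> carrier (sum_group I0 (\<lambda>i. bullet (Fam l i))). PsiB I0 id y = z"
proof -
  obtain S c where fS: "finite S" and SB: "S \<subseteq> Bb"
    and zS: "z = finprod (bullet N) (\<lambda>b. b [^]\<^bsub>bullet N\<^esub> (c b :: int)) S"
    using gspan_elim[of z "bullet N" Bb] sb z by blast
  define y :: "'c + 'd \<Rightarrow> int" where
    "y = (\<lambda>i\<in>I0. case i of Inl _ \<Rightarrow> 0 | Inr b \<Rightarrow> if b \<in> S then c b mod int l else 0)"
  have yc: "y \<in> carrier (sum_group I0 (\<lambda>i. bullet (Fam l i)))"
    unfolding carrier_sumB[OF lpos] mem_Collect_eq
  proof
    show "y \<in> (\<Pi>\<^sub>E i\<in>I0. carrier (bullet (Fam l i)))"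
      unfolding PiE_iff
    proof
      show "\<forall>i\<in>I0. y i \<in> carrier (bullet (Fam l i))"
      proof
        fix i assume i: "i \<in> I0"
        show "y i \<in> carrier (bullet (Fam l i))"
        proof (cases i)
          case (Inl a) then show ?thesis using i by (simp add: y_def)
        next
          case (Inr b) then show ?thesis using i lpos by (simp add: y_def)
        qed
      qed
      show "y \<in> extensional I0" unfolding y_def by simp
    qed
    have "{i \<in> I0. y i \<noteq> 0} \<subseteq> Inr ` S"
    proof
      fix i assume i: "i \<in> {i \<in> I0. y i \<noteq> 0}"
      show "i \<in> Inr ` S"
      proof (cases i)
        case (Inl a) then show ?thesis using i by (auto simp: y_def split: if_splits)
      next
        case (Inr b) then show ?thesis using i by (auto simp: y_def split: if_splits)
      qed
    qed
    then show "finite {i \<in> I0. y i \<noteq> 0}" using fS finite_subset by blast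
  qed
  have c1: "(\<lambda>i. uv id i [^]\<^bsub>bullet N\<^esub> y i) \<in> I0 \<rightarrow> carrier (bullet N)"
    using uv0 by auto
  have sub: "Inl ` ({}::'c set) \<union> Inr ` S \<subseteq> I0" using SB by auto
  have van: "uv id i [^]\<^bsub>bullet N\<^esub> y i = \<one>\<^bsub>bullet N\<^esub>"
    if i: "i \<in> I0 - (Inl ` ({}::'c set) \<union> Inr ` S)" for i
  proof (cases i)
    case (Inl a) then show ?thesis by simp
  next
    case (Inr b) then have "y i = 0" using i by (auto simp: y_def)
    then show ?thesis by simp
  qed
  have e1: "PsiB I0 id y = finprod (bullet N) (\<lambda>a. uv id (Inl a) [^]\<^bsub>bullet N\<^esub> y (Inl a)) ({}::'c set)
      \<otimes>\<^bsub>bullet N\<^esub> finprod (bullet N) (\<lambda>b. uv id (Inr b) [^]\<^bsub>bullet N\<^esub> y (Inr b)) S"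
    unfolding PsiB_def using Bu.gfinprod_split[OF c1 _ fS sub van] by simp
  have e2: "finprod (bullet N) (\<lambda>b. uv id (Inr b) [^]\<^bsub>bullet N\<^esub> y (Inr b)) S
       = finprod (bullet N) (\<lambda>b. b [^]\<^bsub>bullet N\<^esub> y (Inr b)) S" by simp
  have e3: "finprod (bullet N) (\<lambda>b. b [^]\<^bsub>bullet N\<^esub> y (Inr b)) S \<in> carrier (bullet N)"
    using SB Bb by (intro Bu.finprod_closed) auto
  have e4: "finprod (bullet N) (\<lambda>b. b [^]\<^bsub>bullet N\<^esub> y (Inr b)) S = z"
    unfolding zS
  proof (rule Bu.finprod_cong')
    show "(\<lambda>b. b [^]\<^bsub>bullet N\<^esub> c b) \<in> S \<rightarrow> carrier (bullet N)" using SB Bb by auto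
    fix b assume b: "b \<in> S"
    then have bc: "b \<in> carrier (bullet N)" using SB Bb by auto
    have "Inr b \<in> I0" using b SB by auto
    then have "y (Inr b) = c b mod int l" using b by (simp add: y_def)
    then show "b [^]\<^bsub>bullet N\<^esub> y (Inr b) = b [^]\<^bsub>bullet N\<^esub> c b"
      using Bu.pow_mod_l[OF bc expB[OF bc], of "c b"] by simp
  qed simp
  have "PsiB I0 id y = z" using e1 e2 e3 e4 by simp
  then show ?thesis using yc by blast
qed

lemma PsiT_ker:
  assumes x: "x \<in> carrier (sum_group I0 (\<lambda>i. zmod_group l))"
    and x1: "PsiT I0 id id x = \<one>\<^bsub>theta N\<^esub>"
  shows "x = \<one>\<^bsub>sum_group I0 (\<lambda>i. zmod_group l)\<^esub>"
proof -
  have xs: "x \<in> {x \<in> (\<Pi>\<^sub>E i\<in>I0. {0..<int l}). finite {i \<in> I0. x i \<noteq> 0}}"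
    using x carrier_sumT[OF lpos, of I0] by (simp only:)
  then have xE: "x \<in> (\<Pi>\<^sub>E i\<in>I0. {0..<int l})" and fx: "finite {i \<in> I0. x i \<noteq> 0}"
    by (simp_all only: mem_Collect_eq)
  have xall: "\<forall>i\<in>I0. x i \<in> {0..<int l}" using xE unfolding PiE_iff by (rule conjunct1)
  define T1 where "T1 = Inl -` {i \<in> I0. x i \<noteq> 0}"
  define T2 where "T2 = Inr -` {i \<in> I0. x i \<noteq> 0}"
  have fT1: "finite T1" unfolding T1_def by (rule finite_vimageI[OF fx]) simp
  have fT2: "finite T2" unfolding T2_def by (rule finite_vimageI[OF fx]) simp
  have T1B: "T1 \<subseteq> Bm" unfolding T1_def by blast
  have T2B: "T2 \<subseteq> Bb" unfolding T2_def by blast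
  have c1: "(\<lambda>i. wv id id i [^]\<^bsub>theta N\<^esub> x i) \<in> I0 \<rightarrow> carrier (theta N)"
    using wv0 by auto
  have sub: "Inl ` T1 \<union> Inr ` T2 \<subseteq> I0" by (auto simp: T1_def T2_def)
  have van: "wv id id i [^]\<^bsub>theta N\<^esub> x i = \<one>\<^bsub>theta N\<^esub>"
    if i: "i \<in> I0 - (Inl ` T1 \<union> Inr ` T2)" for i
  proof -
    have "x i = 0" using i by (cases i) (auto simp: T1_def T2_def)
    then show ?thesis by simp
  qed
  have BmC: "Bm \<subseteq> carrier (theta N)" using Bm Mminus_carrier by blast
  define q where "q = finprod (theta N) (\<lambda>a. a [^]\<^bsub>theta N\<^esub> x (Inl a)) T1"
  define p where "p = finprod (bullet N) (\<lambda>b. b [^]\<^bsub>bullet N\<^esub> x (Inr b)) T2"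
  have qc: "q \<in> carrier (theta N)" unfolding q_def using T1B BmC by (intro T.finprod_closed) auto
  have pc: "p \<in> carrier (bullet N)" unfolding p_def using T2B Bb by (intro Bu.finprod_closed) auto
  have qM: "q \<in> Mminus" unfolding q_def
    by (rule T.subgroup_finprod[OF Mminus_subgroup fT1])
       (use T1B Bm in \<open>auto intro!: T.subgroup_int_pow[OF Mminus_subgroup]\<close>)
  have hp: "finprod (theta N) (\<lambda>b. res N b [^]\<^bsub>theta N\<^esub> x (Inr b)) T2 = res N p"
  proof -
    have "res N p = finprod (theta N) (\<lambda>b. res N (b [^]\<^bsub>bullet N\<^esub> x (Inr b))) T2"
      unfolding p_def by (rule hom_finprod_gen[OF Bu T res_hom fT2]) (use T2B Bb in auto)
    also have "... = finprod (theta N) (\<lambda>b. res N b [^]\<^bsub>theta N\<^esub> x (Inr b)) T2"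
      by (rule T.finprod_cong') (use T2B Bb in \<open>auto simp: resh.hom_int_pow\<close>)
    finally show ?thesis by simp
  qed
  have "PsiT I0 id id x = finprod (theta N) (\<lambda>a. wv id id (Inl a) [^]\<^bsub>theta N\<^esub> x (Inl a)) T1
      \<otimes>\<^bsub>theta N\<^esub> finprod (theta N) (\<lambda>b. wv id id (Inr b) [^]\<^bsub>theta N\<^esub> x (Inr b)) T2"
    unfolding PsiT_def using T.gfinprod_split[OF c1 fT1 fT2 sub van] by simp
  then have e: "q \<otimes>\<^bsub>theta N\<^esub> res N p = \<one>\<^bsub>theta N\<^esub>"
    using x1 hp by (simp add: q_def)
  have rp: "res N p \<in> carrier (theta N)" using pc by simp
  have tq: "tw N q = inv\<^bsub>theta N\<^esub> q" using qM by (simp add: Mminus_def)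
  have "tw N (q \<otimes>\<^bsub>theta N\<^esub> res N p) = \<one>\<^bsub>theta N\<^esub>" using e by simp
  then have e2: "inv\<^bsub>theta N\<^esub> q \<otimes>\<^bsub>theta N\<^esub> res N p = \<one>\<^bsub>theta N\<^esub>"
    using qc rp tq tw_res[OF pc] by simp
  have "inv\<^bsub>theta N\<^esub> q = q" using e e2 qc rp by (metis T.inv_closed T.right_cancel)
  then have "q \<otimes>\<^bsub>theta N\<^esub> q = \<one>\<^bsub>theta N\<^esub>" using qc by (metis T.r_inv)
  then have q1: "q = \<one>\<^bsub>theta N\<^esub>" using T.odd_sq_one[OF qc expT[OF qc] od] by simp
  then have "res N p = \<one>\<^bsub>theta N\<^esub>" using e rp by simp
  then have "tr N (res N p) = \<one>\<^bsub>bullet N\<^esub>" by simp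
  then have "p \<otimes>\<^bsub>bullet N\<^esub> p = \<one>\<^bsub>bullet N\<^esub>" using tr_res[OF pc] by simp
  then have p1: "p = \<one>\<^bsub>bullet N\<^esub>" using Bu.odd_sq_one[OF pc expB[OF pc] od] by simp
  have d1: "\<forall>a\<in>T1. int l dvd x (Inl a)"
    using im[unfolded gindep_def, rule_format, OF fT1 T1B, of "\<lambda>a. x (Inl a)"] q1 by (simp add: q_def)
  have d2: "\<forall>b\<in>T2. int l dvd x (Inr b)"
    using ib[unfolded gindep_def, rule_format, OF fT2 T2B, of "\<lambda>b. x (Inr b)"] p1 by (simp add: p_def)
  have "\<And>i. i \<in> I0 \<Longrightarrow> x i = 0"
  proof -
    fix i assume i: "i \<in> I0"
    have r: "x i \<in> {0..<int l}" by (rule bspec[OF xall i])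
    show "x i = 0"
    proof (rule ccontr)
      assume nz: "x i \<noteq> 0"
      have "int l dvd x i"
      proof (cases i)
        case (Inl a) then have "a \<in> T1" using i nz by (simp add: T1_def)
        then show ?thesis using d1 Inl by simp
      next
        case (Inr b) then have "b \<in> T2" using i nz by (simp add: T2_def)
        then show ?thesis using d2 Inr by simp
      qed
      then show False using dvd_range_zero r nz by simp
    qed
  qed
  then have "x = (\<lambda>i\<in>I0. 0)" using xE unfolding PiE_iff extensional_def by (intro ext) auto
  then show ?thesis by simp
qed

lemma PsiT_surj:
  assumes z: "z \<in> carrier (theta N)"
  shows "\<exists>x \<in> carrier (sum_group I0 (\<lambda>i. zmod_group l)). PsiT I0 id id x = z"
proof -
  define p where "p = tr N z"
  have pc: "p \<in> carrier (bullet N)" using z by (simp add: p_def)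
  define k :: int where "k = (int l + 1) div 2"
  have kk: "k + k = int l + 1" using od unfolding k_def by (auto elim!: oddE)
  define p' where "p' = p [^]\<^bsub>bullet N\<^esub> k"
  have p'c: "p' \<in> carrier (bullet N)" using pc by (simp add: p'_def)
  define r where "r = res N p'"
  have rc: "r \<in> carrier (theta N)" using p'c by (simp add: r_def)
  have tr_r: "tw N r = r" using tw_res[OF p'c] by (simp add: r_def)
  have pp: "p' \<otimes>\<^bsub>bullet N\<^esub> p' = p"
  proof -
    have "p' \<otimes>\<^bsub>bullet N\<^esub> p' = p [^]\<^bsub>bullet N\<^esub> (k + k)"
      using Bu.int_pow_mult[OF pc, of k k] by (simp add: p'_def)
    also have "... = p [^]\<^bsub>bullet N\<^esub> (int l) \<otimes>\<^bsub>bullet N\<^esub> p [^]\<^bsub>bullet N\<^esub> (1::int)"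
      using kk pc by (simp add: Bu.int_pow_mult)
    also have "... = p" using pc expB[OF pc] by (simp add: int_pow_int)
    finally show ?thesis .
  qed
  have rr: "r \<otimes>\<^bsub>theta N\<^esub> r = z \<otimes>\<^bsub>theta N\<^esub> tw N z"
  proof -
    have "r \<otimes>\<^bsub>theta N\<^esub> r = res N (p' \<otimes>\<^bsub>bullet N\<^esub> p')" using p'c by (simp add: r_def)
    also have "... = res N p" using pp by simp
    also have "... = z \<otimes>\<^bsub>theta N\<^esub> tw N z" using res_tr[OF z] by (simp add: p_def)
    finally show ?thesis .
  qed
  define q where "q = z \<otimes>\<^bsub>theta N\<^esub> inv\<^bsub>theta N\<^esub> r"
  have qc: "q \<in> carrier (theta N)" using z rc by (simp add: q_def)
  have twz: "tw N z \<in> carrier (theta N)" using z by simp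
  have a1: "tw N q = tw N z \<otimes>\<^bsub>theta N\<^esub> tw N (inv\<^bsub>theta N\<^esub> r)"
    unfolding q_def using z rc by (intro twh.hom_mult) simp_all
  have a2: "tw N (inv\<^bsub>theta N\<^esub> r) = inv\<^bsub>theta N\<^esub> r"
    using twh.hom_inv[OF rc] tr_r by simp
  have tq: "tw N q = tw N z \<otimes>\<^bsub>theta N\<^esub> inv\<^bsub>theta N\<^esub> r"
    using a1 a2 by simp
  have "tw N q \<otimes>\<^bsub>theta N\<^esub> q = (z \<otimes>\<^bsub>theta N\<^esub> tw N z) \<otimes>\<^bsub>theta N\<^esub> (inv\<^bsub>theta N\<^esub> r \<otimes>\<^bsub>theta N\<^esub> inv\<^bsub>theta N\<^esub> r)"
    unfolding tq unfolding q_def using z rc twz by (simp add: T.m_ac)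
  also have "... = (r \<otimes>\<^bsub>theta N\<^esub> r) \<otimes>\<^bsub>theta N\<^esub> inv\<^bsub>theta N\<^esub> (r \<otimes>\<^bsub>theta N\<^esub> r)"
    by (simp only: rr[symmetric] T.inv_mult[OF rc rc])
  also have "... = \<one>\<^bsub>theta N\<^esub>" using rc by (simp add: T.r_inv)
  finally have "tw N q \<otimes>\<^bsub>theta N\<^esub> q = \<one>\<^bsub>theta N\<^esub>" .
  then have "inv\<^bsub>theta N\<^esub> q = tw N q" using qc by (intro T.inv_equality) simp_all
  then have qM: "q \<in> Mminus" using qc by (simp add: Mminus_def)
  have zqr: "q \<otimes>\<^bsub>theta N\<^esub> r = z" using z rc by (simp add: q_def T.m_assoc)
  obtain S1 c1 where fS1: "finite S1" and S1B: "S1 \<subseteq> Bm"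
    and qS: "q = finprod (theta N) (\<lambda>a. a [^]\<^bsub>theta N\<^esub> (c1 a :: int)) S1"
    using gspan_elim[of q "theta N" Bm] sm qM by blast
  obtain S2 c2 where fS2: "finite S2" and S2B: "S2 \<subseteq> Bb"
    and pS: "p' = finprod (bullet N) (\<lambda>b. b [^]\<^bsub>bullet N\<^esub> (c2 b :: int)) S2"
    using gspan_elim[of p' "bullet N" Bb] sb p'c by blast
  have BmC: "Bm \<subseteq> carrier (theta N)" using Bm Mminus_carrier by blast
  define x :: "'c + 'd \<Rightarrow> int" where
    "x = (\<lambda>i\<in>I0. case i of Inl a \<Rightarrow> (if a \<in> S1 then c1 a mod int l else 0)
                          | Inr b \<Rightarrow> (if b \<in> S2 then c2 b mod int l else 0))"
  have xc: "x \<in> carrier (sum_group I0 (\<lambda>i. zmod_group l))"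
    unfolding carrier_sumT[OF lpos] mem_Collect_eq
  proof
    show "x \<in> (\<Pi>\<^sub>E i\<in>I0. {0..<int l})"
      unfolding PiE_iff
    proof
      show "\<forall>i\<in>I0. x i \<in> {0..<int l}"
      proof
        fix i assume i: "i \<in> I0"
        show "x i \<in> {0..<int l}"
          using i lpos by (cases i) (simp_all add: x_def)
      qed
      show "x \<in> extensional I0" unfolding x_def by simp
    qed
    have "{i \<in> I0. x i \<noteq> 0} \<subseteq> Inl ` S1 \<union> Inr ` S2"
    proof
      fix i assume i: "i \<in> {i \<in> I0. x i \<noteq> 0}"
      show "i \<in> Inl ` S1 \<union> Inr ` S2"
        using i by (cases i) (auto simp: x_def split: if_splits)
    qed
    then show "finite {i \<in> I0. x i \<noteq> 0}" using fS1 fS2 finite_subset by blast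
  qed
  have cc: "(\<lambda>i. wv id id i [^]\<^bsub>theta N\<^esub> x i) \<in> I0 \<rightarrow> carrier (theta N)"
    using wv0 by auto
  have sub: "Inl ` S1 \<union> Inr ` S2 \<subseteq> I0" using S1B S2B by auto
  have van: "wv id id i [^]\<^bsub>theta N\<^esub> x i = \<one>\<^bsub>theta N\<^esub>"
    if i: "i \<in> I0 - (Inl ` S1 \<union> Inr ` S2)" for i
  proof -
    have "x i = 0" using i by (cases i) (auto simp: x_def)
    then show ?thesis by simp
  qed
  have e1: "PsiT I0 id id x = finprod (theta N) (\<lambda>a. wv id id (Inl a) [^]\<^bsub>theta N\<^esub> x (Inl a)) S1
      \<otimes>\<^bsub>theta N\<^esub> finprod (theta N) (\<lambda>b. wv id id (Inr b) [^]\<^bsub>theta N\<^esub> x (Inr b)) S2"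
    unfolding PsiT_def using T.gfinprod_split[OF cc fS1 fS2 sub van] by simp
  have e2: "finprod (theta N) (\<lambda>a. wv id id (Inl a) [^]\<^bsub>theta N\<^esub> x (Inl a)) S1 = q"
    unfolding qS
  proof (rule T.finprod_cong')
    show "(\<lambda>a. a [^]\<^bsub>theta N\<^esub> c1 a) \<in> S1 \<rightarrow> carrier (theta N)" using S1B BmC by auto
    fix a assume a: "a \<in> S1"
    then have ac: "a \<in> carrier (theta N)" using S1B BmC by auto
    have "Inl a \<in> I0" using a S1B by auto
    then have "x (Inl a) = c1 a mod int l" using a by (simp add: x_def)
    then show "wv id id (Inl a) [^]\<^bsub>theta N\<^esub> x (Inl a) = a [^]\<^bsub>theta N\<^esub> c1 a"
      using T.pow_mod_l[OF ac expT[OF ac], of "c1 a"] by simp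
  qed simp
  have e3: "finprod (theta N) (\<lambda>b. wv id id (Inr b) [^]\<^bsub>theta N\<^esub> x (Inr b)) S2 = r"
  proof -
    have "r = finprod (theta N) (\<lambda>b. res N (b [^]\<^bsub>bullet N\<^esub> c2 b)) S2"
      unfolding r_def pS by (rule hom_finprod_gen[OF Bu T res_hom fS2]) (use S2B Bb in auto)
    also have "... = finprod (theta N) (\<lambda>b. wv id id (Inr b) [^]\<^bsub>theta N\<^esub> x (Inr b)) S2"
    proof (rule T.finprod_cong')
      show "(\<lambda>b. wv id id (Inr b) [^]\<^bsub>theta N\<^esub> x (Inr b)) \<in> S2 \<rightarrow> carrier (theta N)"
        using S2B Bb by auto
      fix b assume b: "b \<in> S2"
      then have bc: "b \<in> carrier (bullet N)" using S2B Bb by auto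
      have "Inr b \<in> I0" using b S2B by auto
      then have "x (Inr b) = c2 b mod int l" using b by (simp add: x_def)
      then show "res N (b [^]\<^bsub>bullet N\<^esub> c2 b) = wv id id (Inr b) [^]\<^bsub>theta N\<^esub> x (Inr b)"
        using Bu.pow_mod_l[OF bc expB[OF bc], of "c2 b"] bc by (simp add: resh.hom_int_pow)
    qed simp
    finally show ?thesis by simp
  qed
  have "PsiT I0 id id x = z" using e1 e2 e3 zqr by simp
  then show ?thesis using xc by blast
qed

lemma PsiB_bij: "bij_betw (PsiB I0 id) (carrier (sum_group I0 (\<lambda>i. bullet (Fam l i)))) (carrier (bullet N))"
proof -
  have h: "PsiB I0 id \<in> hom (sum_group I0 (\<lambda>i. bullet (Fam l i))) (bullet N)"
    by (rule PsiB_hom) (use Bm Bb in auto)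
  have gS: "group (sum_group I0 (\<lambda>i. bullet (Fam l i)))"
    by (rule sum_group) (rule group_bullet_Fam[OF lpos])
  interpret gh: group_hom "sum_group I0 (\<lambda>i. bullet (Fam l i))" "bullet N" "PsiB I0 id"
    by (simp add: group_hom_def group_hom_axioms_def gS Bu.group_axioms h)
  have "kernel (sum_group I0 (\<lambda>i. bullet (Fam l i))) (bullet N) (PsiB I0 id) = {\<one>\<^bsub>sum_group I0 (\<lambda>i. bullet (Fam l i))\<^esub>}"
    unfolding kernel_def
  proof (intro equalityI subsetI)
    fix y assume "y \<in> {y \<in> carrier (sum_group I0 (\<lambda>i. bullet (Fam l i))). PsiB I0 id y = \<one>\<^bsub>bullet N\<^esub>}"
    then show "y \<in> {\<one>\<^bsub>sum_group I0 (\<lambda>i. bullet (Fam l i))\<^esub>}" using PsiB_ker[of y] by blast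
  next
    fix y assume y: "y \<in> {\<one>\<^bsub>sum_group I0 (\<lambda>i. bullet (Fam l i))\<^esub>}"
    have o1: "\<one>\<^bsub>sum_group I0 (\<lambda>i. bullet (Fam l i))\<^esub> \<in> carrier (sum_group I0 (\<lambda>i. bullet (Fam l i)))" by (rule monoid.one_closed[OF group.is_monoid[OF gS]])
    have o2: "PsiB I0 id \<one>\<^bsub>sum_group I0 (\<lambda>i. bullet (Fam l i))\<^esub> = \<one>\<^bsub>bullet N\<^esub>" by (rule gh.hom_one)
    show "y \<in> {y \<in> carrier (sum_group I0 (\<lambda>i. bullet (Fam l i))). PsiB I0 id y = \<one>\<^bsub>bullet N\<^esub>}" using y o1 o2 by blast
  qed
  then have inj: "inj_on (PsiB I0 id) (carrier (sum_group I0 (\<lambda>i. bullet (Fam l i))))"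
    using gh.inj_iff_trivial_ker by simp
  have "PsiB I0 id ` carrier (sum_group I0 (\<lambda>i. bullet (Fam l i))) = carrier (bullet N)"
    using PsiB_surj gh.hom_closed by blast
  then show ?thesis using inj by (simp add: bij_betw_def)
qed

lemma PsiT_bij: "bij_betw (PsiT I0 id id) (carrier (sum_group I0 (\<lambda>i. zmod_group l))) (carrier (theta N))"
proof -
  have h: "PsiT I0 id id \<in> hom (sum_group I0 (\<lambda>i. zmod_group l)) (theta N)"
    by (rule PsiT_hom) (use Bm Bb in auto)
  have gS: "group (sum_group I0 (\<lambda>i. zmod_group l))"
    by (rule sum_group) (simp add: zmod_comm_group lpos comm_group.axioms(2))
  interpret gh: group_hom "sum_group I0 (\<lambda>i. zmod_group l)" "theta N" "PsiT I0 id id"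
    by (simp add: group_hom_def group_hom_axioms_def gS T.group_axioms h)
  have "kernel (sum_group I0 (\<lambda>i. zmod_group l)) (theta N) (PsiT I0 id id) = {\<one>\<^bsub>sum_group I0 (\<lambda>i. zmod_group l)\<^esub>}"
    unfolding kernel_def
  proof (intro equalityI subsetI)
    fix y assume "y \<in> {y \<in> carrier (sum_group I0 (\<lambda>i. zmod_group l)). PsiT I0 id id y = \<one>\<^bsub>theta N\<^esub>}"
    then show "y \<in> {\<one>\<^bsub>sum_group I0 (\<lambda>i. zmod_group l)\<^esub>}" using PsiT_ker[of y] by blast
  next
    fix y assume y: "y \<in> {\<one>\<^bsub>sum_group I0 (\<lambda>i. zmod_group l)\<^esub>}"
    have o1: "\<one>\<^bsub>sum_group I0 (\<lambda>i. zmod_group l)\<^esub> \<in> carrier (sum_group I0 (\<lambda>i. zmod_group l))" by (rule monoid.one_closed[OF group.is_monoid[OF gS]])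
    have o2: "PsiT I0 id id \<one>\<^bsub>sum_group I0 (\<lambda>i. zmod_group l)\<^esub> = \<one>\<^bsub>theta N\<^esub>" by (rule gh.hom_one)
    show "y \<in> {y \<in> carrier (sum_group I0 (\<lambda>i. zmod_group l)). PsiT I0 id id y = \<one>\<^bsub>theta N\<^esub>}" using y o1 o2 by blast
  qed
  then have inj: "inj_on (PsiT I0 id id) (carrier (sum_group I0 (\<lambda>i. zmod_group l)))"
    using gh.inj_iff_trivial_ker by simp
  have "PsiT I0 id id ` carrier (sum_group I0 (\<lambda>i. zmod_group l)) = carrier (theta N)"
    using PsiT_surj gh.hom_closed by blast
  then show ?thesis using inj by (simp add: bij_betw_def)
qed

end

lemma core:
  "\<exists>I :: ('c + 'd) set. mackey_hom (mackey_sum I (Fam l)) N (PsiT I id id, PsiB I id) \<and>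
     bij_betw (PsiT I id id) (carrier (theta (mackey_sum I (Fam l)))) (carrier (theta N)) \<and>
     bij_betw (PsiB I id) (carrier (bullet (mackey_sum I (Fam l)))) (carrier (bullet N)) \<and>
     (\<forall>a. Inl a \<in> I \<longrightarrow> a \<in> Mminus) \<and> (\<forall>b. Inr b \<in> I \<longrightarrow> b \<in> carrier (bullet N))"
proof -
  obtain Bm Bb where Bm: "Bm \<subseteq> Mminus" and im: "gindep (theta N) l Bm" and sm: "Mminus \<subseteq> gspan (theta N) Bm"
    and Bb: "Bb \<subseteq> carrier (bullet N)" and ib: "gindep (bullet N) l Bb" and sb: "carrier (bullet N) \<subseteq> gspan (bullet N) Bb"
    using bases_exist by blast
  show ?thesis
  proof (rule exI[of _ "Inl ` Bm \<union> Inr ` Bb"], intro conjI allI impI)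
    show "mackey_hom (mackey_sum (Inl ` Bm \<union> Inr ` Bb) (Fam l)) N (PsiT (Inl ` Bm \<union> Inr ` Bb) id id, PsiB (Inl ` Bm \<union> Inr ` Bb) id)"
      by (rule Psi0_hom[OF Bm im sm Bb ib sb])
    show "bij_betw (PsiT (Inl ` Bm \<union> Inr ` Bb) id id) (carrier (theta (mackey_sum (Inl ` Bm \<union> Inr ` Bb) (Fam l)))) (carrier (theta N))"
      using PsiT_bij[OF Bm im sm Bb ib sb] by simp
    show "bij_betw (PsiB (Inl ` Bm \<union> Inr ` Bb) id) (carrier (bullet (mackey_sum (Inl ` Bm \<union> Inr ` Bb) (Fam l)))) (carrier (bullet N))"
      using PsiB_bij[OF Bm im sm Bb ib sb] by simp
    fix a assume "Inl a \<in> Inl ` Bm \<union> Inr ` Bb" then show "a \<in> Mminus" using Bm by blast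
  next
    fix b assume "Inr b \<in> Inl ` Bm \<union> Inr ` Bb" then show "b \<in> carrier (bullet N)" using Bb by blast
  qed
qed

end



lemma (in group) half_pow:
  assumes x: "x \<in> carrier G" and xl: "x [^] (l::nat) = \<one>" and o: "odd l"
  shows "(x \<otimes> x) [^] ((int l + 1) div 2) = x"
proof -
  have kk: "2 * ((int l + 1) div 2) = int l + 1" using o by (auto elim!: oddE)
  have "x \<otimes> x = x [^] (2::int)" using int_pow_mult[OF x, of 1 1] x by simp
  then have "(x \<otimes> x) [^] ((int l + 1) div 2) = x [^] (int l + 1)"
    using x kk by (simp add: int_pow_pow)
  also have "... = x [^] (int l) \<otimes> x [^] (1::int)" by (rule int_pow_mult[OF x])
  also have "... = x" using x xl by (simp add: int_pow_int)
  finally show ?thesis .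
qed

lemma mackey_inv:
  assumes gA1: "group (theta A)" and gA2: "group (bullet A)"
    and f: "mackey_hom A B f"
    and b1: "bij_betw (fst f) (carrier (theta A)) (carrier (theta B))"
    and b2: "bij_betw (snd f) (carrier (bullet A)) (carrier (bullet B))"
    and ctw: "\<And>x. x \<in> carrier (theta A) \<Longrightarrow> tw A x \<in> carrier (theta A)"
    and cres: "\<And>y. y \<in> carrier (bullet A) \<Longrightarrow> res A y \<in> carrier (theta A)"
    and ctr: "\<And>x. x \<in> carrier (theta A) \<Longrightarrow> tr A x \<in> carrier (bullet A)"
  shows "mackey_iso B A (inv_into (carrier (theta A)) (fst f), inv_into (carrier (bullet A)) (snd f))"
proof -
  define g1 where "g1 = inv_into (carrier (theta A)) (fst f)"
  define g2 where "g2 = inv_into (carrier (bullet A)) (snd f)"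
  have fm: "fst f \<in> hom (theta A) (theta B)" "snd f \<in> hom (bullet A) (bullet B)"
    and ftw: "\<And>x. x \<in> carrier (theta A) \<Longrightarrow> fst f (tw A x) = tw B (fst f x)"
    and fres: "\<And>y. y \<in> carrier (bullet A) \<Longrightarrow> fst f (res A y) = res B (snd f y)"
    and ftr: "\<And>x. x \<in> carrier (theta A) \<Longrightarrow> snd f (tr A x) = tr B (fst f x)"
    using f unfolding mackey_hom_def by auto
  have i1: "fst f \<in> iso (theta A) (theta B)" using fm b1 by (simp add: iso_def)
  have i2: "snd f \<in> iso (bullet A) (bullet B)" using fm b2 by (simp add: iso_def)
  have j1: "g1 \<in> iso (theta B) (theta A)" unfolding g1_def by (rule group.iso_set_sym[OF gA1 i1])
  have j2: "g2 \<in> iso (bullet B) (bullet A)" unfolding g2_def by (rule group.iso_set_sym[OF gA2 i2])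
  have g1c: "g1 x \<in> carrier (theta A)" and fg1: "fst f (g1 x) = x" if "x \<in> carrier (theta B)" for x
    using that b1 unfolding g1_def bij_betw_def
    by (auto intro: inv_into_into f_inv_into_f)
  have g2c: "g2 x \<in> carrier (bullet A)" and fg2: "snd f (g2 x) = x" if "x \<in> carrier (bullet B)" for x
    using that b2 unfolding g2_def bij_betw_def
    by (auto intro: inv_into_into f_inv_into_f)
  have gf1: "g1 (fst f a) = a" if "a \<in> carrier (theta A)" for a
    using that b1 unfolding g1_def bij_betw_def by (simp add: inv_into_f_f)
  have gf2: "g2 (snd f a) = a" if "a \<in> carrier (bullet A)" for a
    using that b2 unfolding g2_def bij_betw_def by (simp add: inv_into_f_f)
  have "mackey_hom B A (g1, g2)"
    unfolding mackey_hom_def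
  proof (intro conjI ballI)
    show "fst (g1, g2) \<in> hom (theta B) (theta A)" using j1 by (simp add: iso_def)
    show "snd (g1, g2) \<in> hom (bullet B) (bullet A)" using j2 by (simp add: iso_def)
  next
    fix x assume x: "x \<in> carrier (theta B)"
    have "fst f (tw A (g1 x)) = tw B x" using ftw[OF g1c[OF x]] fg1[OF x] by simp
    then have "g1 (tw B x) = tw A (g1 x)" using gf1[OF ctw[OF g1c[OF x]]] by simp
    then show "fst (g1, g2) (tw B x) = tw A (fst (g1, g2) x)" by simp
    have "snd f (tr A (g1 x)) = tr B x" using ftr[OF g1c[OF x]] fg1[OF x] by simp
    then have "g2 (tr B x) = tr A (g1 x)" using gf2[OF ctr[OF g1c[OF x]]] by simp
    then show "snd (g1, g2) (tr B x) = tr A (fst (g1, g2) x)" by simp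
  next
    fix y assume y: "y \<in> carrier (bullet B)"
    have "fst f (res A (g2 y)) = res B y" using fres[OF g2c[OF y]] fg2[OF y] by simp
    then have "g1 (res B y) = res A (g2 y)" using gf1[OF cres[OF g2c[OF y]]] by simp
    then show "fst (g1, g2) (res B y) = res A (snd (g1, g2) y)" by simp
  qed
  then show ?thesis using j1 j2 unfolding mackey_iso_def g1_def g2_def by simp
qed

lemma mackey_comp:
  assumes f: "mackey_hom A B f" and h: "mackey_hom B C h"
  shows "mackey_hom A C (\<lambda>x. fst h (fst f x), \<lambda>y. snd h (snd f y))"
proof -
  have f1: "fst f \<in> hom (theta A) (theta B)" and f2: "snd f \<in> hom (bullet A) (bullet B)"
    and ftw: "\<And>x. x \<in> carrier (theta A) \<Longrightarrow> fst f (tw A x) = tw B (fst f x)"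
    and fres: "\<And>y. y \<in> carrier (bullet A) \<Longrightarrow> fst f (res A y) = res B (snd f y)"
    and ftr: "\<And>x. x \<in> carrier (theta A) \<Longrightarrow> snd f (tr A x) = tr B (fst f x)"
    using f unfolding mackey_hom_def by auto
  have h1: "fst h \<in> hom (theta B) (theta C)" and h2: "snd h \<in> hom (bullet B) (bullet C)"
    and htw: "\<And>x. x \<in> carrier (theta B) \<Longrightarrow> fst h (tw B x) = tw C (fst h x)"
    and hres: "\<And>y. y \<in> carrier (bullet B) \<Longrightarrow> fst h (res B y) = res C (snd h y)"
    and htr: "\<And>x. x \<in> carrier (theta B) \<Longrightarrow> snd h (tr B x) = tr C (fst h x)"
    using h unfolding mackey_hom_def by auto
  have c1: "\<And>x. x \<in> carrier (theta A) \<Longrightarrow> fst f x \<in> carrier (theta B)" using f1 by (simp add: hom_in_carrier)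
  have c2: "\<And>x. x \<in> carrier (bullet A) \<Longrightarrow> snd f x \<in> carrier (bullet B)" using f2 by (simp add: hom_in_carrier)
  have k1: "(\<lambda>x. fst h (fst f x)) \<in> hom (theta A) (theta C)"
    using f1 h1 c1 by (auto simp: hom_def Pi_def)
  have k2: "(\<lambda>x. snd h (snd f x)) \<in> hom (bullet A) (bullet C)"
    using f2 h2 c2 by (auto simp: hom_def Pi_def)
  show ?thesis unfolding mackey_hom_def
    using k1 k2 ftw htw fres hres ftr htr c1 c2 by simp
qed

lemma sum_closed:
  assumes l: "0 < l"
  shows "\<And>x. x \<in> carrier (sum_group I (\<lambda>i. zmod_group l)) \<Longrightarrow>
           (\<lambda>i\<in>I. tw (Fam l i) (x i)) \<in> carrier (sum_group I (\<lambda>i. zmod_group l))"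
    and "\<And>y. y \<in> carrier (sum_group I (\<lambda>i. bullet (Fam l i))) \<Longrightarrow>
           (\<lambda>i\<in>I. res (Fam l i) (y i)) \<in> carrier (sum_group I (\<lambda>i. zmod_group l))"
    and "\<And>x. x \<in> carrier (sum_group I (\<lambda>i. zmod_group l)) \<Longrightarrow>
           (\<lambda>i\<in>I. tr (Fam l i) (x i)) \<in> carrier (sum_group I (\<lambda>i. bullet (Fam l i)))"
proof -
  fix x assume x: "x \<in> carrier (sum_group I (\<lambda>i. zmod_group l))"
  then have xE: "\<forall>i\<in>I. x i \<in> {0..<int l}" and fx: "finite {i \<in> I. x i \<noteq> 0}"
    by (simp_all add: carrier_sumT[OF l] PiE_iff)
  show "(\<lambda>i\<in>I. tw (Fam l i) (x i)) \<in> carrier (sum_group I (\<lambda>i. zmod_group l))"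
    unfolding carrier_sumT[OF l] mem_Collect_eq
  proof
    show "(\<lambda>i\<in>I. tw (Fam l i) (x i)) \<in> (\<Pi>\<^sub>E i\<in>I. {0..<int l})"
      unfolding PiE_iff using xE l by (auto simp: Fam_def split: sum.split)
    show "finite {i \<in> I. (\<lambda>i\<in>I. tw (Fam l i) (x i)) i \<noteq> 0}"
    proof (rule finite_subset[OF subsetI fx])
      fix i assume "i \<in> {i \<in> I. (\<lambda>i\<in>I. tw (Fam l i) (x i)) i \<noteq> 0}"
      then show "i \<in> {i \<in> I. x i \<noteq> 0}" by (cases i) auto
    qed
  qed
  show "(\<lambda>i\<in>I. tr (Fam l i) (x i)) \<in> carrier (sum_group I (\<lambda>i. bullet (Fam l i)))"
    unfolding carrier_sumB[OF l] mem_Collect_eq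
  proof
    show "(\<lambda>i\<in>I. tr (Fam l i) (x i)) \<in> (\<Pi>\<^sub>E i\<in>I. carrier (bullet (Fam l i)))"
      unfolding PiE_iff using xE l by (auto simp: Fam_def split: sum.split)
    show "finite {i \<in> I. (\<lambda>i\<in>I. tr (Fam l i) (x i)) i \<noteq> 0}"
    proof (rule finite_subset[OF subsetI fx])
      fix i assume "i \<in> {i \<in> I. (\<lambda>i\<in>I. tr (Fam l i) (x i)) i \<noteq> 0}"
      then show "i \<in> {i \<in> I. x i \<noteq> 0}" by (cases i) auto
    qed
  qed
next
  fix y assume y: "y \<in> carrier (sum_group I (\<lambda>i. bullet (Fam l i)))"
  then have yE: "\<forall>i\<in>I. y i \<in> carrier (bullet (Fam l i))" and fy: "finite {i \<in> I. y i \<noteq> 0}"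
    by (simp_all add: carrier_sumB[OF l] PiE_iff)
  show "(\<lambda>i\<in>I. res (Fam l i) (y i)) \<in> carrier (sum_group I (\<lambda>i. zmod_group l))"
    unfolding carrier_sumT[OF l] mem_Collect_eq
  proof
    show "(\<lambda>i\<in>I. res (Fam l i) (y i)) \<in> (\<Pi>\<^sub>E i\<in>I. {0..<int l})"
      unfolding PiE_iff using yE l by (auto simp: Fam_def split: sum.split)
    show "finite {i \<in> I. (\<lambda>i\<in>I. res (Fam l i) (y i)) i \<noteq> 0}"
    proof (rule finite_subset[OF subsetI fy])
      fix i assume "i \<in> {i \<in> I. (\<lambda>i\<in>I. res (Fam l i) (y i)) i \<noteq> 0}"
      then show "i \<in> {i \<in> I. y i \<noteq> 0}" by (cases i) auto
    qed
  qed
qed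



context zlm begin

lemma sum_groups:
  "group (theta (mackey_sum I (Fam l)))" "group (bullet (mackey_sum I (Fam l)))"
  by (simp_all add: group_bullet_Fam[OF lpos] zmod_comm_group lpos comm_group.axioms(2))

lemma core_iso:
  "\<exists>I :: ('c + 'd) set. mackey_hom (mackey_sum I (Fam l)) N (PsiT I id id, PsiB I id) \<and>
     mackey_iso N (mackey_sum I (Fam l))
       (inv_into (carrier (theta (mackey_sum I (Fam l)))) (PsiT I id id),
        inv_into (carrier (bullet (mackey_sum I (Fam l)))) (PsiB I id)) \<and>
     bij_betw (PsiT I id id) (carrier (theta (mackey_sum I (Fam l)))) (carrier (theta N)) \<and>
     bij_betw (PsiB I id) (carrier (bullet (mackey_sum I (Fam l)))) (carrier (bullet N)) \<and>
     (\<forall>a. Inl a \<in> I \<longrightarrow> a \<in> Mminus) \<and> (\<forall>b. Inr b \<in> I \<longrightarrow> b \<in> carrier (bullet N))"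
proof -
  obtain I :: "('c + 'd) set" where
    h: "mackey_hom (mackey_sum I (Fam l)) N (PsiT I id id, PsiB I id)" and
    b1: "bij_betw (PsiT I id id) (carrier (theta (mackey_sum I (Fam l)))) (carrier (theta N))" and
    b2: "bij_betw (PsiB I id) (carrier (bullet (mackey_sum I (Fam l)))) (carrier (bullet N))" and
    r: "(\<forall>a. Inl a \<in> I \<longrightarrow> a \<in> Mminus) \<and> (\<forall>b. Inr b \<in> I \<longrightarrow> b \<in> carrier (bullet N))"
    using core by blast
  have "mackey_iso N (mackey_sum I (Fam l))
       (inv_into (carrier (theta (mackey_sum I (Fam l)))) (fst (PsiT I id id, PsiB I id)),
        inv_into (carrier (bullet (mackey_sum I (Fam l)))) (snd (PsiT I id id, PsiB I id)))"
    by (rule mackey_inv[OF sum_groups h]) (use b1 b2 sum_closed[OF lpos] in simp_all)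
  then show ?thesis using h b1 b2 r by auto
qed

lemma decomposition: "sum_of_H_S l N"
proof -
  obtain I :: "('c + 'd) set" and f where "mackey_iso N (mackey_sum I (Fam l)) f"
    using core_iso by blast
  moreover have "\<forall>i\<in>I. Fam l i = H_mackey l \<or> Fam l i = S_mackey l"
    by (auto simp: Fam_def split: sum.split)
  ultimately show ?thesis unfolding sum_of_H_S_def mackey_isomorphic_def by blast
qed

end

lemma section_exists:
  fixes N :: "('c, 'd) mackey" and P :: "('e, 'f) mackey"
  assumes pr: "Factorial_Ring.prime l" and od: "odd l"
    and zN: "zl_module l N" and zP: "zl_module l P"
    and g: "mackey_hom N P g" and gs: "mackey_surj N P g"
  shows "\<exists>s. mackey_hom P N s \<and> (\<forall>z\<in>carrier (theta P). fst g (fst s z) = z) \<and>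
             (\<forall>z\<in>carrier (bullet P). snd g (snd s z) = z)"
proof -
  interpret NN: zlm l N using zN pr od by (simp add: zlm_def)
  interpret PP: zlm l P using zP pr od by (simp add: zlm_def)
  obtain I :: "('e + 'f) set" where
    h: "mackey_hom (mackey_sum I (Fam l)) P (PP.PsiT I id id, PP.PsiB I id)" and
    iso: "mackey_iso P (mackey_sum I (Fam l))
       (inv_into (carrier (theta (mackey_sum I (Fam l)))) (PP.PsiT I id id),
        inv_into (carrier (bullet (mackey_sum I (Fam l)))) (PP.PsiB I id))" and
    b1: "bij_betw (PP.PsiT I id id) (carrier (theta (mackey_sum I (Fam l)))) (carrier (theta P))" and
    b2: "bij_betw (PP.PsiB I id) (carrier (bullet (mackey_sum I (Fam l)))) (carrier (bullet P))" and
    Im: "\<And>a. Inl a \<in> I \<Longrightarrow> a \<in> PP.Mminus" and Ib: "\<And>b. Inr b \<in> I \<Longrightarrow> b \<in> carrier (bullet P)"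
    using PP.core_iso by blast
  have g1: "fst g \<in> hom (theta N) (theta P)" and g2: "snd g \<in> hom (bullet N) (bullet P)"
    and gtw: "\<And>x. x \<in> carrier (theta N) \<Longrightarrow> fst g (tw N x) = tw P (fst g x)"
    and gres: "\<And>y. y \<in> carrier (bullet N) \<Longrightarrow> fst g (res N y) = res P (snd g y)"
    using g unfolding mackey_hom_def by auto
  interpret gh1: group_hom "theta N" "theta P" "fst g"
    by (simp add: group_hom_def group_hom_axioms_def NN.T.group_axioms PP.T.group_axioms g1)
  interpret gh2: group_hom "bullet N" "bullet P" "snd g"
    by (simp add: group_hom_def group_hom_axioms_def NN.Bu.group_axioms PP.Bu.group_axioms g2)
  have sT: "fst g ` carrier (theta N) = carrier (theta P)"
    and sB: "snd g ` carrier (bullet N) = carrier (bullet P)"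
    using gs unfolding mackey_surj_def by auto
  define k :: int where "k = (int l + 1) div 2"
  have exA: "\<exists>m. m \<in> NN.Mminus \<and> fst g m = a" if a: "a \<in> PP.Mminus" for a
  proof -
    have ac: "a \<in> carrier (theta P)" and ta: "tw P a = inv\<^bsub>theta P\<^esub> a"
      using a by (auto simp: PP.Mminus_def)
    obtain m0 where m0: "m0 \<in> carrier (theta N)" and gm0: "fst g m0 = a"
      using ac sT by (metis imageE)
    define u where "u = m0 \<otimes>\<^bsub>theta N\<^esub> inv\<^bsub>theta N\<^esub> (tw N m0)"
    have uc: "u \<in> carrier (theta N)" using m0 by (simp add: u_def)
    have tu: "tw N u = inv\<^bsub>theta N\<^esub> u"
    proof -
      have "tw N u = tw N m0 \<otimes>\<^bsub>theta N\<^esub> inv\<^bsub>theta N\<^esub> m0"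
        using m0 NN.tw_tw[OF m0] by (simp add: u_def)
      also have "... = inv\<^bsub>theta N\<^esub> u"
        using m0 by (simp add: u_def NN.T.inv_mult NN.T.m_comm)
      finally show ?thesis .
    qed
    define m where "m = u [^]\<^bsub>theta N\<^esub> k"
    have mM: "m \<in> NN.Mminus"
      using uc tu by (simp add: m_def NN.Mminus_def NN.twh.hom_int_pow NN.T.int_pow_inv)
    have "fst g u = a \<otimes>\<^bsub>theta P\<^esub> a"
      using m0 gm0 gtw[OF m0] ta ac by (simp add: u_def)
    then have "fst g m = (a \<otimes>\<^bsub>theta P\<^esub> a) [^]\<^bsub>theta P\<^esub> k"
      using uc by (simp add: m_def gh1.hom_int_pow)
    also have "... = a" unfolding k_def by (rule PP.T.half_pow[OF ac PP.expT[OF ac] od])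
    finally show ?thesis using mM by blast
  qed
  have exB: "\<exists>n. n \<in> carrier (bullet N) \<and> snd g n = b" if b: "b \<in> carrier (bullet P)" for b
    using b sB by (metis imageE)
  define \<alpha> where "\<alpha> a = (SOME m. m \<in> NN.Mminus \<and> fst g m = a)" for a
  define \<beta> where "\<beta> b = (SOME n. n \<in> carrier (bullet N) \<and> snd g n = b)" for b
  have \<alpha>ok: "\<alpha> a \<in> NN.Mminus \<and> fst g (\<alpha> a) = a" if "a \<in> PP.Mminus" for a
    unfolding \<alpha>_def by (rule someI_ex[OF exA[OF that]])
  have \<beta>ok: "\<beta> b \<in> carrier (bullet N) \<and> snd g (\<beta> b) = b" if "b \<in> carrier (bullet P)" for b
    unfolding \<beta>_def by (rule someI_ex[OF exB[OF that]])
  have am: "\<And>a. Inl a \<in> I \<Longrightarrow> \<alpha> a \<in> NN.Mminus" using \<alpha>ok Im by blast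
  have bc: "\<And>b. Inr b \<in> I \<Longrightarrow> \<beta> b \<in> carrier (bullet N)" using \<beta>ok Ib by blast
  have sig: "mackey_hom (mackey_sum I (Fam l)) N (NN.PsiT I \<alpha> \<beta>, NN.PsiB I \<beta>)"
    by (rule NN.Psi_mackey_hom[where I=I and \<alpha>=\<alpha> and \<beta>=\<beta>, OF am bc])
  have natT: "fst g (NN.PsiT I \<alpha> \<beta> x) = PP.PsiT I id id x"
    if x: "x \<in> carrier (sum_group I (\<lambda>i. zmod_group l))" for x
  proof -
    have fx: "finite {i \<in> I. x i \<noteq> 0}" using x by (simp add: carrier_sumT[OF NN.lpos])
    have c1: "(\<lambda>i. NN.wv \<alpha> \<beta> i [^]\<^bsub>theta N\<^esub> x i) \<in> I \<rightarrow> carrier (theta N)"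
      using NN.wv_carrier[where I=I and \<alpha>=\<alpha> and \<beta>=\<beta>, OF am bc] by auto
    have fin1: "finite {i \<in> I. NN.wv \<alpha> \<beta> i [^]\<^bsub>theta N\<^esub> x i \<noteq> \<one>\<^bsub>theta N\<^esub>}"
      by (rule NN.fin_supp[OF fx]) simp
    have "fst g (NN.PsiT I \<alpha> \<beta> x) = gfinprod (theta P) (\<lambda>i. fst g (NN.wv \<alpha> \<beta> i [^]\<^bsub>theta N\<^esub> x i)) I"
      unfolding NN.PsiT_def by (rule gfinprod_hom[OF NN.T PP.T g1 c1 fin1])
    also have "... = PP.PsiT I id id x"
      unfolding PP.PsiT_def
    proof (rule PP.T.gfinprod_cong)
      show "(\<lambda>i. fst g (NN.wv \<alpha> \<beta> i [^]\<^bsub>theta N\<^esub> x i)) \<in> I \<rightarrow> carrier (theta P)"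
        using c1 by (auto simp: Pi_def)
      fix i show "i \<in> I =simp=> fst g (NN.wv \<alpha> \<beta> i [^]\<^bsub>theta N\<^esub> x i) = PP.wv id id i [^]\<^bsub>theta P\<^esub> x i"
        unfolding simp_implies_def
      proof -
        assume i: "i \<in> I"
        have wc: "NN.wv \<alpha> \<beta> i \<in> carrier (theta N)" using NN.wv_carrier[where I=I and \<alpha>=\<alpha> and \<beta>=\<beta>, OF am bc i] .
        have "fst g (NN.wv \<alpha> \<beta> i) = PP.wv id id i"
        proof (cases i)
          case (Inl a) then show ?thesis using \<alpha>ok Im i by auto
        next
          case (Inr b) then show ?thesis using \<beta>ok Ib i gres bc by auto
        qed
        then show "fst g (NN.wv \<alpha> \<beta> i [^]\<^bsub>theta N\<^esub> x i) = PP.wv id id i [^]\<^bsub>theta P\<^esub> x i"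
          using wc by (simp add: gh1.hom_int_pow)
      qed
    qed simp
    finally show ?thesis .
  qed
  have natB: "snd g (NN.PsiB I \<beta> y) = PP.PsiB I id y"
    if y: "y \<in> carrier (sum_group I (\<lambda>i. bullet (Fam l i)))" for y
  proof -
    have fy: "finite {i \<in> I. y i \<noteq> 0}" using y by (simp add: carrier_sumB[OF NN.lpos])
    have c1: "(\<lambda>i. NN.uv \<beta> i [^]\<^bsub>bullet N\<^esub> y i) \<in> I \<rightarrow> carrier (bullet N)"
      using NN.uv_carrier[where I=I and \<alpha>=\<alpha> and \<beta>=\<beta>, OF am bc] by auto
    have fin1: "finite {i \<in> I. NN.uv \<beta> i [^]\<^bsub>bullet N\<^esub> y i \<noteq> \<one>\<^bsub>bullet N\<^esub>}"
      by (rule NN.fin_supp[OF fy]) simp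
    have "snd g (NN.PsiB I \<beta> y) = gfinprod (bullet P) (\<lambda>i. snd g (NN.uv \<beta> i [^]\<^bsub>bullet N\<^esub> y i)) I"
      unfolding NN.PsiB_def by (rule gfinprod_hom[OF NN.Bu PP.Bu g2 c1 fin1])
    also have "... = PP.PsiB I id y"
      unfolding PP.PsiB_def
    proof (rule PP.Bu.gfinprod_cong)
      show "(\<lambda>i. snd g (NN.uv \<beta> i [^]\<^bsub>bullet N\<^esub> y i)) \<in> I \<rightarrow> carrier (bullet P)"
        using c1 by (auto simp: Pi_def)
      fix i show "i \<in> I =simp=> snd g (NN.uv \<beta> i [^]\<^bsub>bullet N\<^esub> y i) = PP.uv id i [^]\<^bsub>bullet P\<^esub> y i"
        unfolding simp_implies_def
      proof -
        assume i: "i \<in> I"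
        have uc: "NN.uv \<beta> i \<in> carrier (bullet N)" using NN.uv_carrier[where I=I and \<alpha>=\<alpha> and \<beta>=\<beta>, OF am bc i] .
        have "snd g (NN.uv \<beta> i) = PP.uv id i"
        proof (cases i)
          case (Inl a) then show ?thesis by simp
        next
          case (Inr b) then show ?thesis using \<beta>ok Ib i by auto
        qed
        then show "snd g (NN.uv \<beta> i [^]\<^bsub>bullet N\<^esub> y i) = PP.uv id i [^]\<^bsub>bullet P\<^esub> y i"
          using uc by (simp add: gh2.hom_int_pow)
      qed
    qed simp
    finally show ?thesis .
  qed
  define j1 where "j1 = inv_into (carrier (theta (mackey_sum I (Fam l)))) (PP.PsiT I id id)"
  define j2 where "j2 = inv_into (carrier (bullet (mackey_sum I (Fam l)))) (PP.PsiB I id)"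
  have jh: "mackey_hom P (mackey_sum I (Fam l)) (j1, j2)"
    using iso unfolding mackey_iso_def j1_def j2_def by simp
  have s: "mackey_hom P N (\<lambda>x. fst (NN.PsiT I \<alpha> \<beta>, NN.PsiB I \<beta>) (fst (j1, j2) x),
                          \<lambda>y. snd (NN.PsiT I \<alpha> \<beta>, NN.PsiB I \<beta>) (snd (j1, j2) y))"
    by (rule mackey_comp[OF jh sig])
  have img1: "z \<in> PP.PsiT I id id ` carrier (theta (mackey_sum I (Fam l)))"
    if "z \<in> carrier (theta P)" for z
    using that b1 unfolding bij_betw_def by blast
  have img2: "z \<in> PP.PsiB I id ` carrier (bullet (mackey_sum I (Fam l)))"
    if "z \<in> carrier (bullet P)" for z
    using that b2 unfolding bij_betw_def by blast
  have j1c': "j1 z \<in> carrier (theta (mackey_sum I (Fam l)))" if "z \<in> carrier (theta P)" for z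
    unfolding j1_def by (rule inv_into_into[OF img1[OF that]])
  have j1c: "j1 z \<in> carrier (sum_group I (\<lambda>i. zmod_group l))" if "z \<in> carrier (theta P)" for z
    using j1c'[OF that] by simp
  have Pj1: "PP.PsiT I id id (j1 z) = z" if "z \<in> carrier (theta P)" for z
    unfolding j1_def by (rule f_inv_into_f[OF img1[OF that]])
  have j2c': "j2 z \<in> carrier (bullet (mackey_sum I (Fam l)))" if "z \<in> carrier (bullet P)" for z
    unfolding j2_def by (rule inv_into_into[OF img2[OF that]])
  have j2c: "j2 z \<in> carrier (sum_group I (\<lambda>i. bullet (Fam l i)))" if "z \<in> carrier (bullet P)" for z
    using j2c'[OF that] by simp
  have Pj2: "PP.PsiB I id (j2 z) = z" if "z \<in> carrier (bullet P)" for z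
    unfolding j2_def by (rule f_inv_into_f[OF img2[OF that]])
  show ?thesis
  proof (intro exI conjI ballI)
    show "mackey_hom P N (\<lambda>x. fst (NN.PsiT I \<alpha> \<beta>, NN.PsiB I \<beta>) (fst (j1, j2) x),
                          \<lambda>y. snd (NN.PsiT I \<alpha> \<beta>, NN.PsiB I \<beta>) (snd (j1, j2) y))" by (rule s)
  next
    fix z assume z: "z \<in> carrier (theta P)"
    show "fst g (fst (\<lambda>x. fst (NN.PsiT I \<alpha> \<beta>, NN.PsiB I \<beta>) (fst (j1, j2) x),
                          \<lambda>y. snd (NN.PsiT I \<alpha> \<beta>, NN.PsiB I \<beta>) (snd (j1, j2) y)) z) = z"
      using natT[OF j1c[OF z]] Pj1[OF z] by simp
  next
    fix z assume z: "z \<in> carrier (bullet P)"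
    show "snd g (snd (\<lambda>x. fst (NN.PsiT I \<alpha> \<beta>, NN.PsiB I \<beta>) (fst (j1, j2) x),
                          \<lambda>y. snd (NN.PsiT I \<alpha> \<beta>, NN.PsiB I \<beta>) (snd (j1, j2) y)) z) = z"
      using natB[OF j2c[OF z]] Pj2[OF z] by simp
  qed
qed



theorem proposition3p5:
  fixes l :: nat
  assumes "Factorial_Ring.prime l" and "odd l"
  shows "(\<forall>M :: ('a, 'b) mackey. zl_module l M \<longrightarrow> sum_of_H_S l M) \<and>
         (\<forall>(M :: ('a, 'b) mackey) (N :: ('c, 'd) mackey) (P :: ('e, 'f) mackey) g f.
            zl_module l M \<and> zl_module l N \<and> zl_module l P \<and>
            mackey_hom N P g \<and> mackey_surj N P g \<and> mackey_hom M P f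
            \<longrightarrow> lifts_through M N f g) \<and>
         (\<forall>(A :: ('g, 'h) mackey) (B :: ('i, 'j) mackey) (C :: ('k, 'm) mackey) f g.
            zl_module l A \<and> zl_module l B \<and> zl_module l C \<and> short_exact A B C f g
            \<longrightarrow> ses_splits B C g)"
proof (intro conjI allI impI)
  fix M :: "('a, 'b) mackey"
  assume "zl_module l M"
  then interpret zlm l M using assms by (simp add: zlm_def)
  show "sum_of_H_S l M" by (rule decomposition)
next
  fix M :: "('a, 'b) mackey" and N :: "('c, 'd) mackey" and P :: "('e, 'f) mackey" and g f
  assume h: "zl_module l M \<and> zl_module l N \<and> zl_module l P \<and>
            mackey_hom N P g \<and> mackey_surj N P g \<and> mackey_hom M P f"
  then obtain s where s: "mackey_hom P N s" and sg: "\<forall>z\<in>carrier (theta P). fst g (fst s z) = z"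
    and sg2: "\<forall>z\<in>carrier (bullet P). snd g (snd s z) = z"
    using section_exists[OF assms, of N P g] by blast
  have f: "mackey_hom M P f" using h by blast
  have f1: "fst f \<in> hom (theta M) (theta P)" and f2: "snd f \<in> hom (bullet M) (bullet P)"
    using f unfolding mackey_hom_def by auto
  show "lifts_through M N f g"
    unfolding lifts_through_def
  proof (intro exI conjI ballI)
    show "mackey_hom M N (\<lambda>x. fst s (fst f x), \<lambda>y. snd s (snd f y))"
      by (rule mackey_comp[OF f s])
  next
    fix x assume "x \<in> carrier (theta M)"
    then have "fst f x \<in> carrier (theta P)" using f1 by (simp add: hom_in_carrier)
    then show "fst g (fst (\<lambda>x. fst s (fst f x), \<lambda>y. snd s (snd f y)) x) = fst f x" using sg by simp
  next
    fix y assume "y \<in> carrier (bullet M)"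
    then have "snd f y \<in> carrier (bullet P)" using f2 by (simp add: hom_in_carrier)
    then show "snd g (snd (\<lambda>x. fst s (fst f x), \<lambda>y. snd s (snd f y)) y) = snd f y" using sg2 by simp
  qed
next
  fix A :: "('g, 'h) mackey" and B :: "('i, 'j) mackey" and C :: "('k, 'm) mackey" and f g
  assume h: "zl_module l A \<and> zl_module l B \<and> zl_module l C \<and> short_exact A B C f g"
  then have "mackey_hom B C g" "mackey_surj B C g" "zl_module l B" "zl_module l C"
    unfolding short_exact_def by auto
  then show "ses_splits B C g"
    unfolding ses_splits_def using section_exists[OF assms, of B C g] by blast
qed


end
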